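(* Let $a,b\in\mathbb C\setminus\{-2,2\}$ with $a\neq b$ and let $\tilde C$ be the genus $3$ hyperelliptic curve $y^2=(x^4+ax^2+1)(x^4+bx^2+1)$ with hyperelliptic involution $\iota$. Let $\sigma,\tau$ be involutions of $\tilde C$, each with exactly $4$ fixed points, inducing on the $x$-line $\mathbb P^1$ the involutions $\bar\sigma([x:y])=[-x:y]$ and $\bar\tau([x:y])=[y:x]$. Then the quotient curves have the following defining equations: $\tilde C/\langle\iota\tau\rangle:\ y^2=(x^2-4)(x^2+a-2)(x^2+b-2)$; $\tilde C/\langle\iota\sigma\rangle:\ y^2=x(x^2+ax+1)(x^2+bx+1)$; $\tilde C/\langle\iota\sigma\tau\rangle:\ y^2=(x^2+4)(x^2+a+2)(x^2+b+2)$; $\tilde C/\langle\tau\rangle:\ y^2=(x^2+a-2)(x^2+b-2)$; $\tilde C/\langle\sigma\rangle:\ y^2=(x^2+ax+1)(x^2+bx+1)$; $\tilde C/\langle\sigma\tau\rangle:\ y^2=(x^2+a+2)(x^2+b+2)$; $\tilde C/\langle\iota\sigma,\iota\tau\rangle:\ y^2=(x+a)(x+b)(x-2)$; $\tilde C/\langle\iota\tau,\sigma\rangle:\ y^2=(x+a)(x+b)(x-2)(x+2)$; $\tilde C/\langle\iota\sigma,\tau\rangle:\ y^2=(x+a)(x+b)(x+2)$.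
   Context: Each of $\bar\sigma,\bar\tau$ has two lifts to $\tilde C$ (differing by $\iota$); exactly one of them has $4$ fixed points and the other is fixed-point free. *)

theory Defs
  imports "HOL-Algebra.Ring" "HOL-Algebra.RingHom" "HOL-Algebra.Subrings"
    "HOL-Computational_Algebra.Polynomial" "HOL-Computational_Algebra.Fraction_Field"
begin

type_synonym rfun = "complex poly fract"

text \<open>An element (r0, r1) stands for r0 + r1 * y in the function field
  C(x)[y]/(y^2 - f(x)) of the (smooth projective) curve y^2 = f(x).\<close>
type_synonym ffel = "rfun \<times> rfun"

definition rpoly :: "complex poly \<Rightarrow> rfun" where
  "rpoly p = Fract p 1"

definition ff_mult :: "complex poly \<Rightarrow> ffel \<Rightarrow> ffel \<Rightarrow> ffel" where
  "ff_mult f u v = (fst u * fst v + rpoly f * snd u * snd v, fst u * snd v + snd u * fst v)"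

definition ff_add :: "ffel \<Rightarrow> ffel \<Rightarrow> ffel" where
  "ff_add u v = (fst u + fst v, snd u + snd v)"

definition FF :: "complex poly \<Rightarrow> ffel ring" where
  "FF f = \<lparr>carrier = UNIV, monoid.mult = ff_mult f, one = (1, 0),
           zero = (0, 0), add = ff_add\<rparr>"

definition cst :: "complex \<Rightarrow> ffel" where
  "cst c = (rpoly [:c:], 0)"

definition xx :: ffel where
  "xx = (rpoly [:0, 1:], 0)"

text \<open>Automorphisms of the curve y^2 = f(x), acting (by pull-back) on its
  function field: C-algebra automorphisms of the function field.\<close>
definition curve_aut :: "complex poly \<Rightarrow> (ffel \<Rightarrow> ffel) \<Rightarrow> bool" where
  "curve_aut f s \<longleftrightarrow> s \<in> ring_iso (FF f) (FF f) \<and> (\<forall>c. s (cst c) = cst c)"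

definition curve_involution :: "complex poly \<Rightarrow> (ffel \<Rightarrow> ffel) \<Rightarrow> bool" where
  "curve_involution f s \<longleftrightarrow> curve_aut f s \<and> s \<circ> s = id \<and> s \<noteq> id"

text \<open>Points of the smooth projective curve = places of its function field
  over C, i.e. valuation rings O with C \<subset> O \<subset> K, O \<noteq> K.\<close>
definition place :: "complex poly \<Rightarrow> ffel set \<Rightarrow> bool" where
  "place f V \<longleftrightarrow> subring V (FF f) \<and> range cst \<subseteq> V \<and> V \<noteq> carrier (FF f) \<and>
     (\<forall>z \<in> carrier (FF f). z \<noteq> \<zero>\<^bsub>FF f\<^esub> \<longrightarrow> z \<in> V \<or> inv\<^bsub>FF f\<^esub> z \<in> V)"

definition fixed_points :: "complex poly \<Rightarrow> (ffel \<Rightarrow> ffel) \<Rightarrow> ffel set set" where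
  "fixed_points f s = {V. place f V \<and> s ` V = V}"

text \<open>Function field of the quotient curve by the group generated by the
  automorphisms in G: the fixed subfield.\<close>
definition quot_field :: "complex poly \<Rightarrow> (ffel \<Rightarrow> ffel) set \<Rightarrow> ffel ring" where
  "quot_field f G = (FF f)\<lparr>carrier := {z. \<forall>s \<in> G. s z = z}\<rparr>"

text \<open>The quotient curve has defining equation y^2 = g(x): its function field
  is C-isomorphic to that of y^2 = g(x) (equivalently, the smooth projective
  models are isomorphic).\<close>
definition quotient_has_eq :: "complex poly \<Rightarrow> (ffel \<Rightarrow> ffel) set \<Rightarrow> complex poly \<Rightarrow> bool" where
  "quotient_has_eq f G g \<longleftrightarrow>
     (\<exists>h. h \<in> ring_iso (quot_field f G) (FF g) \<and> (\<forall>c. h (cst c) = cst c))"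

definition hyp_inv :: "ffel \<Rightarrow> ffel" where
  "hyp_inv u = (fst u, - snd u)"

end

theory Submission
  imports Defs "HOL-Computational_Algebra.Fundamental_Theorem_Algebra" "HOL-Algebra.QuotRing"
begin

definition rc :: "complex \<Rightarrow> rfun" where "rc c = rpoly [:c:]"
definition XX :: rfun where "XX = rpoly [:0, 1:]"
definition ev :: "rfun \<Rightarrow> complex poly \<Rightarrow> rfun" where
  "ev t p = poly (map_poly rc p) t"
definition nconst :: "rfun \<Rightarrow> bool" where "nconst t \<longleftrightarrow> (\<forall>c. t \<noteq> rc c)"

lemma rpoly_add [simp]: "rpoly (p + q) = rpoly p + rpoly q"
  by (simp add: rpoly_def)
lemma rpoly_mult [simp]: "rpoly (p * q) = rpoly p * rpoly q"
  by (simp add: rpoly_def)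
lemma rpoly_minus [simp]: "rpoly (- p) = - rpoly p"
  by (simp add: rpoly_def)
lemma rpoly_diff [simp]: "rpoly (p - q) = rpoly p - rpoly q"
  by (simp add: rpoly_def)
lemma rpoly_0 [simp]: "rpoly 0 = 0"
  by (simp add: rpoly_def fract_collapse)
lemma rpoly_1 [simp]: "rpoly 1 = 1"
  by (simp add: rpoly_def fract_collapse)
lemma rpoly_inj [simp]: "rpoly p = rpoly q \<longleftrightarrow> p = q"
  by (simp add: rpoly_def eq_fract)
lemma rpoly_eq0 [simp]: "rpoly p = 0 \<longleftrightarrow> p = 0"
  using rpoly_inj[of p 0] by simp

lemma rc_add [simp]: "rc (a + b) = rc a + rc b"
  by (simp add: rc_def flip: rpoly_add)
lemma rc_mult [simp]: "rc (a * b) = rc a * rc b"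
  by (simp add: rc_def flip: rpoly_mult)
lemma rc_minus [simp]: "rc (- a) = - rc a"
  by (simp add: rc_def flip: rpoly_minus)
lemma rc_diff [simp]: "rc (a - b) = rc a - rc b"
  by (simp add: rc_def flip: rpoly_diff)
lemma rc_0 [simp]: "rc 0 = 0"
  by (simp add: rc_def)
lemma rc_1 [simp]: "rc 1 = 1"
  unfolding rc_def one_pCons[symmetric] by simp
lemma rc_inj [simp]: "rc a = rc b \<longleftrightarrow> a = b"
  by (simp add: rc_def)
lemma rc_eq0 [simp]: "rc a = 0 \<longleftrightarrow> a = 0"
  using rc_inj[of a 0] by simp
lemma rc_numeral [simp]: "rc (numeral n) = numeral n"
  by (induct n) (simp_all only: numeral.simps rc_add rc_1)
lemma rc_inverse [simp]: "rc (inverse a) = inverse (rc a)"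
proof (cases "a = 0")
  case False
  then have "rc (inverse a) * rc a = 1" by (simp flip: rc_mult)
  then show ?thesis using False by (simp add: field_simps)
qed simp
lemma rc_divide [simp]: "rc (a / b) = rc a / rc b"
  by (simp add: divide_inverse)
lemma rc_power [simp]: "rc (a ^ n) = rc a ^ n"
  by (induct n) simp_all

lemma rpoly_pCons: "rpoly (pCons a p) = rc a + XX * rpoly p"
proof -
  have "pCons a p = [:a:] + [:0,1:] * p" by simp
  then show ?thesis unfolding rc_def XX_def by (metis rpoly_add rpoly_mult)
qed

lemma ev_pCons [simp]: "ev t (pCons a p) = rc a + t * ev t p"
  by (simp add: ev_def map_poly_pCons)
lemma ev_0 [simp]: "ev t 0 = 0"
  by (simp add: ev_def)
lemma ev_const [simp]: "ev t [:c:] = rc c"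
  by simp
lemma ev_1 [simp]: "ev t 1 = 1"
  by (simp add: one_pCons)
lemma ev_add [simp]: "ev t (p + q) = ev t p + ev t q"
proof (induct p arbitrary: q)
  case 0 then show ?case by simp
next
  case (pCons a p q)
  obtain b q' where "q = pCons b q'" by (cases q)
  then show ?case using pCons(2)[of q'] by (simp add: algebra_simps)
qed
lemma ev_smult [simp]: "ev t (smult c p) = rc c * ev t p"
  by (induct p) (simp_all add: algebra_simps)
lemma ev_mult [simp]: "ev t (p * q) = ev t p * ev t q"
  by (induct p) (simp_all add: algebra_simps)
lemma ev_minus [simp]: "ev t (- p) = - ev t p"
  using ev_add[of t p "- p"] by (simp add: eq_neg_iff_add_eq_0 add.commute)
lemma ev_diff [simp]: "ev t (p - q) = ev t p - ev t q"
  using ev_add[of t p "- q"] by simp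
lemma ev_XX: "ev XX p = rpoly p"
  by (induct p) (simp_all add: rpoly_pCons)
lemma ev_pcompose: "ev t (pcompose p q) = ev (ev t q) p"
  by (induct p) (simp_all add: pcompose_pCons)

lemma ev_nonzero:
  assumes "nconst t" "p \<noteq> 0"
  shows "ev t p \<noteq> 0"
  using assms(2)
proof (induct "degree p" arbitrary: p)
  case 0
  then obtain c where "p = [:c:]" by (metis degree_eq_zeroE)
  with 0 show ?case by simp
next
  case (Suc n)
  have "\<exists>z. poly p z = 0"
    by (rule fundamental_theorem_of_algebra_alt) (use Suc(2) in auto)
  then obtain z where "poly p z = 0" by blast
  then obtain q where q: "p = [:-z, 1:] * q" by (auto simp: poly_eq_0_iff_dvd)
  with Suc have "q \<noteq> 0" by auto
  have "degree p = degree [:-z, 1:] + degree q"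
    unfolding q by (rule degree_mult_eq) (use \<open>q \<noteq> 0\<close> in auto)
  with Suc(2) have "degree q = n" by simp
  with Suc \<open>q \<noteq> 0\<close> have "ev t q \<noteq> 0" by auto
  moreover have "t - rc z \<noteq> 0" using assms(1) by (auto simp: nconst_def)
  moreover have "ev t [:-z, 1:] = t - rc z" by simp
  ultimately show ?case using q by simp
qed

definition psi :: "rfun \<Rightarrow> rfun \<Rightarrow> rfun" where
  "psi t r = (let pq = (SOME pq. snd pq \<noteq> 0 \<and> r = Fract (fst pq) (snd pq))
              in ev t (fst pq) / ev t (snd pq))"

lemma psi_Fract:
  assumes "nconst t" "q \<noteq> 0"
  shows "psi t (Fract p q) = ev t p / ev t q"
proof -
  define pq where "pq = (SOME pq. snd pq \<noteq> 0 \<and> Fract p q = Fract (fst pq) (snd pq))"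
  have "\<exists>pq. snd pq \<noteq> 0 \<and> Fract p q = Fract (fst pq) (snd pq)"
    using assms by (intro exI[of _ "(p,q)"]) auto
  then have pq: "snd pq \<noteq> 0" "Fract p q = Fract (fst pq) (snd pq)"
    unfolding pq_def by (metis (mono_tags, lifting) someI_ex)+
  then have "p * snd pq = fst pq * q" using assms by (simp add: eq_fract)
  then have "ev t p * ev t (snd pq) = ev t (fst pq) * ev t q"
    by (metis ev_mult)
  moreover have "ev t (snd pq) \<noteq> 0" "ev t q \<noteq> 0" using pq assms ev_nonzero by auto
  ultimately have "ev t (fst pq) / ev t (snd pq) = ev t p / ev t q"
    by (simp add: field_simps)
  then show ?thesis unfolding psi_def pq_def[symmetric] Let_def by simp
qed

lemma Fract_rpoly: "q \<noteq> 0 \<Longrightarrow> Fract p q = rpoly p / rpoly q"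
  by (simp add: rpoly_def)

lemma psi_rpoly [simp]: "nconst t \<Longrightarrow> psi t (rpoly p) = ev t p"
  using psi_Fract[of t 1 p] by (simp add: rpoly_def)

lemma psi_add [simp]: "nconst t \<Longrightarrow> psi t (r + s) = psi t r + psi t s"
proof (cases r; cases s)
  fix a b c d assume *: "nconst t" "r = Fract a b" "b \<noteq> 0" "s = Fract c d" "d \<noteq> 0"
  then have "ev t b \<noteq> 0" "ev t d \<noteq> 0" using ev_nonzero by auto
  with * show ?thesis by (simp add: psi_Fract field_simps)
qed
lemma psi_mult [simp]: "nconst t \<Longrightarrow> psi t (r * s) = psi t r * psi t s"
proof (cases r; cases s)
  fix a b c d assume *: "nconst t" "r = Fract a b" "b \<noteq> 0" "s = Fract c d" "d \<noteq> 0"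
  then have "ev t b \<noteq> 0" "ev t d \<noteq> 0" using ev_nonzero by auto
  with * show ?thesis by (simp add: psi_Fract field_simps)
qed
lemma psi_rc [simp]: "nconst t \<Longrightarrow> psi t (rc c) = rc c"
  by (metis psi_rpoly ev_const rc_def)
lemma psi_0 [simp]: "nconst t \<Longrightarrow> psi t 0 = 0"
  using psi_rc[of t 0] by simp
lemma psi_1 [simp]: "nconst t \<Longrightarrow> psi t 1 = 1"
  using psi_rc[of t 1] by simp
lemma psi_numeral [simp]: "nconst t \<Longrightarrow> psi t (numeral n) = numeral n"
  using psi_rc[of t "numeral n"] by simp
lemma psi_XX [simp]: "nconst t \<Longrightarrow> psi t XX = t"
  unfolding XX_def by simp
lemma psi_minus [simp]: "nconst t \<Longrightarrow> psi t (- r) = - psi t r"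
  using psi_add[of t r "- r"] by (simp add: eq_neg_iff_add_eq_0 add.commute)
lemma psi_diff [simp]: "nconst t \<Longrightarrow> psi t (r - s) = psi t r - psi t s"
  using psi_add[of t r "- s"] by simp
lemma psi_inverse [simp]: "nconst t \<Longrightarrow> psi t (inverse r) = inverse (psi t r)"
proof (cases "r = 0")
  case False
  assume t: "nconst t"
  have "psi t r * psi t (inverse r) = 1" by (metis psi_mult psi_1 right_inverse False t)
  then show ?thesis by (rule inverse_unique[symmetric])
qed simp
lemma psi_divide [simp]: "nconst t \<Longrightarrow> psi t (r / s) = psi t r / psi t s"
  by (simp add: divide_inverse)
lemma psi_power [simp]: "nconst t \<Longrightarrow> psi t (r ^ n) = psi t r ^ n"
  by (induct n) simp_all
lemma psi_inj: "nconst t \<Longrightarrow> psi t r = psi t s \<Longrightarrow> r = s"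
proof -
  assume t: "nconst t" and e: "psi t r = psi t s"
  have "psi t (r - s) = 0" using t e by simp
  show "r = s"
  proof (rule ccontr)
    assume "r \<noteq> s"
    then have "psi t ((r - s) * inverse (r - s)) = 1" using t by simp
    with \<open>psi t (r - s) = 0\<close> t show False by simp
  qed
qed

lemma hom_unique:
  assumes t: "nconst t"
    and add: "\<And>r s. \<beta> (r + s) = \<beta> r + \<beta> s"
    and mult: "\<And>r s. \<beta> (r * s) = \<beta> r * \<beta> s"
    and cst: "\<And>c. \<beta> (rc c) = rc c"
    and x: "\<beta> XX = t"
  shows "\<beta> r = psi t r"
proof -
  have pol: "\<beta> (rpoly p) = ev t p" for p
    by (induct p) (simp_all add: rpoly_pCons add mult cst x flip: rc_0)
  have inv: "\<beta> (inverse s) = inverse (\<beta> s)" for s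
  proof (cases "s = 0")
    case True
    then show ?thesis using cst[of 0] by simp
  next
    case False
    have "\<beta> s * \<beta> (inverse s) = 1" using False cst[of 1] by (metis mult right_inverse rc_1)
    then show ?thesis by (rule inverse_unique[symmetric])
  qed
  show ?thesis
  proof (cases r)
    case (Fract a b)
    then show ?thesis using t
      by (simp add: Fract_rpoly psi_Fract divide_inverse mult inv pol)
  qed
qed

lemma psi_psi:
  assumes "nconst t" "nconst u" "nconst (psi u t)"
  shows "psi u (psi t r) = psi (psi u t) r"
  by (rule hom_unique) (use assms in simp_all)

lemma nconst_XX [simp]: "nconst XX"
  by (simp add: nconst_def XX_def rc_def)

lemma psi_XX_id [simp]: "psi XX r = r"
  using hom_unique[of XX id r] by simp


lemma XX_ne [simp]: "XX \<noteq> rc c"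
  using nconst_XX nconst_def by blast

lemma XX_plus_rc: "XX + rc c \<noteq> 0"
proof
  assume h: "XX + rc c = 0"
  have "XX = (XX + rc c) - rc c" by simp
  also have "\<dots> = - rc c" using h by simp
  finally show False using XX_ne[of "-c"] by simp
qed

lemma XX_nz [simp]: "XX \<noteq> 0" "XX + 1 \<noteq> 0" "XX - 1 \<noteq> 0" "1 + XX \<noteq> 0" "1 - XX \<noteq> 0"
    "XX + 2 \<noteq> 0" "XX - 2 \<noteq> 0"
proof -
  show "XX \<noteq> 0" using XX_plus_rc[of 0] by simp
  show "XX + 1 \<noteq> 0" using XX_plus_rc[of 1] by simp
  show "XX + 2 \<noteq> 0" using XX_plus_rc[of 2] by simp
  show "XX - 1 \<noteq> 0" using XX_plus_rc[of "-1"] by simp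
  show "XX - 2 \<noteq> 0" using XX_plus_rc[of "-2"] by simp
  show "1 + XX \<noteq> 0" using XX_plus_rc[of 1] by (simp add: add.commute)
  show "1 - XX \<noteq> 0" using XX_plus_rc[of "-1"] by (metis add.commute diff_0 minus_diff_eq neg_0_equal_iff_equal rc_1 rc_minus uminus_add_conv_diff)
qed

lemma rpoly_eq_rc: "rpoly p = rc c \<longleftrightarrow> p = [:c:]"
  by (simp add: rc_def)

lemma rc_mult_rpoly: "rc c * rpoly q = rpoly (smult c q)"
  by (simp add: rc_def flip: rpoly_mult)

lemma nconst_frac:
  assumes "t * rpoly q = rpoly p" "\<And>c. p \<noteq> smult c q"
  shows "nconst t"
  unfolding nconst_def
proof (intro allI notI)
  fix c assume "t = rc c"
  then have "rpoly p = rpoly (smult c q)" using assms(1) by (simp add: rc_mult_rpoly)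
  then show False using assms(2) by simp
qed

lemma nconst_neg_XX [simp]: "nconst (- XX)"
  by (rule nconst_frac[of _ 1 "[:0,-1:]"]) (simp_all add: rpoly_pCons)

lemma rfun_numeral_nz [simp]: "(numeral n :: rfun) \<noteq> 0"
  by (metis rc_numeral rc_eq0 zero_neq_numeral)

lemma nconst_inv_XX [simp]: "nconst (inverse XX)"
  by (rule nconst_frac[of _ "[:0,1:]" 1]) (simp_all add: rpoly_pCons one_pCons)
lemma nconst_XX2 [simp]: "nconst (XX^2)"
  by (rule nconst_frac[of _ 1 "[:0,0,1:]"]) (simp_all add: rpoly_pCons power2_eq_square)

lemma psi_psi':
  assumes "nconst t" "nconst u" "psi u t = v" "nconst v"
  shows "psi u (psi t r) = psi v r"
  using psi_psi[of t u r] assms by simp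

lemma psi_neg_invol [simp]: "psi (- XX) (psi (- XX) r) = r"
  using psi_psi'[of "- XX" "- XX" XX r] by simp

lemma even_odd_dec: "\<exists>e od. rpoly N = psi (XX^2) e + XX * psi (XX^2) od"
proof (induct N)
  case 0
  show ?case by (intro exI[of _ 0]) simp
next
  case (pCons a N)
  then obtain e od where eo: "rpoly N = psi (XX^2) e + XX * psi (XX^2) od" by blast
  have "psi (XX^2) (rc a + XX * od) = rc a + XX^2 * psi (XX^2) od" by simp
  then have "rpoly (pCons a N) = psi (XX^2) (rc a + XX * od) + XX * psi (XX^2) e"
    by (simp add: rpoly_pCons eo algebra_simps power2_eq_square)
  then show ?case by blast
qed

lemma even_poly:
  assumes "psi (- XX) (rpoly N) = rpoly N"
  shows "\<exists>s. rpoly N = psi (XX^2) s"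
proof -
  obtain e od where eo: "rpoly N = psi (XX^2) e + XX * psi (XX^2) od"
    using even_odd_dec by blast
  have c: "psi (- XX) (psi (XX^2) z) = psi (XX^2) z" for z
    using psi_psi'[of "XX^2" "- XX" "XX^2" z] by simp
  have "psi (- XX) (rpoly N) = psi (XX^2) e - XX * psi (XX^2) od"
    unfolding eo by (simp add: c)
  with assms eo have "2 * XX * psi (XX^2) od = 0" by (simp add: algebra_simps)
  then have "psi (XX^2) od = 0" by simp
  with eo show ?thesis by auto
qed

lemma inv1:
  assumes "psi (- XX) r = r"
  shows "\<exists>s. r = psi (XX^2) s"
proof (cases r)
  case (Fract p q)
  define qm where "qm = pcompose q [:0,-1:]"
  have Aq: "psi (- XX) (rpoly q) = rpoly qm"
  proof -
    have "psi (- XX) (rpoly q) = ev (- XX) q" by simp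
    also have "\<dots> = ev (ev XX [:0,-1:]) q" by (simp add: ev_XX rpoly_pCons)
    also have "\<dots> = rpoly qm" unfolding qm_def ev_XX[symmetric] ev_pcompose ..
    finally show ?thesis .
  qed
  have qm0: "qm \<noteq> 0" using Fract(2) by (simp add: qm_def pcompose_eq_0_iff)
  have rq: "r = rpoly p / rpoly q" using Fract by (simp add: Fract_rpoly)
  have AQ: "psi (- XX) (rpoly (q * qm)) = rpoly (q * qm)"
  proof -
    have "psi (- XX) (rpoly (q * qm)) = psi (- XX) (rpoly q) * psi (- XX) (rpoly qm)" by simp
    also have "\<dots> = rpoly qm * rpoly q" using Aq psi_neg_invol by metis
    finally show ?thesis by (simp add: mult.commute)
  qed
  have AP: "psi (- XX) (rpoly (p * qm)) = rpoly (p * qm)"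
  proof -
    have E: "rpoly (p * qm) = r * rpoly (q * qm)" using rq Fract(2) by simp
    then have "psi (- XX) (rpoly (p * qm)) = psi (- XX) (r * rpoly (q * qm))" by (rule arg_cong)
    also have "\<dots> = psi (- XX) r * psi (- XX) (rpoly (q * qm))" by (rule psi_mult[OF nconst_neg_XX])
    also have "\<dots> = r * rpoly (q * qm)" by (simp only: assms AQ)
    finally show ?thesis using E[symmetric] by (rule trans)
  qed
  obtain sP where sP: "rpoly (p * qm) = psi (XX^2) sP" using even_poly[OF AP] by blast
  obtain sQ where sQ: "rpoly (q * qm) = psi (XX^2) sQ" using even_poly[OF AQ] by blast
  have "r = rpoly (p * qm) / rpoly (q * qm)" using rq qm0 Fract(2) by simp
  also have "\<dots> = psi (XX^2) sP / psi (XX^2) sQ" by (simp only: sP sQ)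
  also have "\<dots> = psi (XX^2) (sP / sQ)" by simp
  finally have "r = psi (XX^2) (sP / sQ)" .
  then show ?thesis by blast
qed


lemma rci_sq [simp]: "rc \<i> * rc \<i> = -1"
  by (simp flip: rc_mult)
lemma inv_rci [simp]: "inverse (rc \<i>) = - rc \<i>"
  by (simp flip: rc_inverse rc_minus)
lemma rci_nz [simp]: "rc \<i> \<noteq> 0"
  by simp

lemma XX_ne_num [simp]: "XX \<noteq> 1" "XX \<noteq> -1" "XX \<noteq> 2" "XX \<noteq> -2" "XX \<noteq> 0"
  using XX_ne[of 1] XX_ne[of "-1"] XX_ne[of 2] XX_ne[of "-2"] XX_ne[of 0] by simp_all
lemma rfun_nz2 [simp]: "(0::rfun) \<noteq> 2" "(2::rfun) \<noteq> 0" "(1::rfun) \<noteq> -1" "(-1::rfun) \<noteq> 1"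
proof -
  have "(2::rfun) \<noteq> 0" using rfun_numeral_nz[of "num.Bit0 num.One"] by simp
  then show "(0::rfun) \<noteq> 2" "(2::rfun) \<noteq> 0" by metis+
  show "(1::rfun) \<noteq> -1" "(-1::rfun) \<noteq> 1" using rc_inj[of 1 "-1"] by (auto simp del: rc_inj)
qed
lemma cm1 [simp]: "(-1::complex) \<noteq> 1" "(1::complex) \<noteq> -1"
  by (simp_all add: complex_eq_iff)
lemma XX_nz2 [simp]: "1 + XX \<noteq> 0" "2 + XX \<noteq> 0"
  using XX_nz by (simp_all add: add.commute)

definition "mo = (1 + XX) / (1 - XX)"
definition "mi = (XX - 1) / (XX + 1)"
definition "wm = (XX - 2) / (XX + 2)"
definition "km = (1 - XX) / (1 + XX)"

lemma nconst_mo [simp]: "nconst mo"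
  by (rule nconst_frac[of _ "[:1,-1:]" "[:1,1:]"]) (simp_all add: mo_def rpoly_pCons)
lemma nconst_mi [simp]: "nconst mi"
proof (rule nconst_frac[of _ "[:1,1:]" "[:-1,1:]"])
  show "mi * rpoly [:1, 1:] = rpoly [:- 1, 1:]" by (simp add: mi_def rpoly_pCons add.commute)
  fix c :: complex
  have "[:-1,1:] = smult c [:1,1:] \<Longrightarrow> False"
  proof -
    assume "[:-1,1:] = smult c [:1,1:]"
    then have "-1 = c" "1 = c" by simp_all
    then show False using cm1(1) by metis
  qed
  then show "[:-1,1:] \<noteq> smult c [:1,1:]" by blast
qed
lemma nconst_wm [simp]: "nconst wm"
  by (rule nconst_frac[of _ "[:2,1:]" "[:-2,1:]"]) (simp_all add: wm_def rpoly_pCons add.commute)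
lemma nconst_km [simp]: "nconst km"
  by (rule nconst_frac[of _ "[:1,1:]" "[:1,-1:]"]) (simp_all add: km_def rpoly_pCons)
lemma nconst_t1 [simp]: "nconst (XX + inverse XX)"
  by (rule nconst_frac[of _ "[:0,1:]" "[:1,0,1:]"]) (simp_all add: rpoly_pCons field_simps)
lemma nconst_t2 [simp]: "nconst (XX - inverse XX)"
  by (rule nconst_frac[of _ "[:0,1:]" "[:-1,0,1:]"]) (simp_all add: rpoly_pCons field_simps)
lemma nconst_mi2 [simp]: "nconst (mi^2)"
proof (rule nconst_frac[of _ "[:1,2,1:]" "[:1,-2,1:]"])
  have a: "rpoly [:1,2,1:] = (XX+1)^2" by (simp add: rpoly_pCons power2_eq_square algebra_simps)
  have b: "rpoly [:1,-2,1:] = (XX-1)^2" by (simp add: rpoly_pCons power2_eq_square algebra_simps)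
  show "mi^2 * rpoly [:1,2,1:] = rpoly [:1,-2,1:]" unfolding a b mi_def by (simp add: power_divide)
  fix c :: complex
  show "[:1,-2,1:] \<noteq> smult c [:1,2,1:]"
  proof
    assume "[:1,-2,1:] = smult c [:1,2,1:]"
    then have h: "1 = c" "-2 = 2 * c" by (metis coeff_pCons_0 coeff_smult mult.right_neutral,
       metis coeff_pCons_0 coeff_pCons_Suc coeff_smult mult.commute)
    then show False by (simp add: complex_eq_iff)
  qed
qed
lemma nconst_iX [simp]: "nconst (rc \<i> * XX)"
  by (rule nconst_frac[of _ 1 "[:0,\<i>:]"]) (simp_all add: rpoly_pCons one_pCons)
lemma nconst_miX [simp]: "nconst (- (rc \<i> * XX))"
  by (rule nconst_frac[of _ 1 "[:0,-\<i>:]"]) (simp_all add: rpoly_pCons one_pCons)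
lemma nconst_iinvX [simp]: "nconst (rc \<i> * inverse XX)"
  by (rule nconst_frac[of _ "[:0,1:]" "[:\<i>:]"]) (simp_all add: rpoly_pCons one_pCons)
lemma nconst_inv_XX2 [simp]: "nconst (inverse (XX^2))"
  by (rule nconst_frac[of _ "[:0,0,1:]" 1]) (simp_all add: rpoly_pCons one_pCons power2_eq_square field_simps)
lemma nconst_t4 [simp]: "nconst (XX^2 + inverse (XX^2))"
proof (rule nconst_frac[of _ "[:0,0,1:]" "[:1,0,0,0,1:]"])
  have a: "rpoly [:0,0,1:] = XX^2" by (simp add: rpoly_pCons power2_eq_square)
  have b: "rpoly [:1,0,0,0,1:] = XX^2 * XX^2 + 1" by (simp add: rpoly_pCons power2_eq_square algebra_simps)
  show "(XX^2 + inverse (XX^2)) * rpoly [:0,0,1:] = rpoly [:1,0,0,0,1:]"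
    unfolding a b by (simp add: distrib_right)
  fix c :: complex
  show "[:1,0,0,0,1:] \<noteq> smult c [:0,0,1:]" by simp
qed

lemma inv2:
  assumes "psi (inverse XX) r = r"
  shows "\<exists>s. r = psi (XX + inverse XX) s"
proof -
  define R where "R = psi mo r"
  have F1: "psi (- XX) mo = km" by (simp add: mo_def km_def)
  have "psi mo (inverse XX) = inverse mo" by simp
  then have F2: "psi mo (inverse XX) = km" by (simp add: mo_def km_def)
  have F3: "psi mi mo = XX"
  proof -
    have "psi mi mo = (1 + mi) / (1 - mi)" by (simp add: mo_def)
    also have "1 + mi = 2 * XX / (XX + 1)" by (simp add: mi_def field_simps)
    also have "1 - mi = 2 / (XX + 1)" by (simp add: mi_def field_simps)
    finally show ?thesis by simp
  qed
  have F4: "psi mi (XX^2) = mi^2" by simp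
  have "psi (XX + inverse XX) wm = (XX + inverse XX - 2) / (XX + inverse XX + 2)"
    by (simp add: wm_def)
  also have "\<dots> = (XX - 1)^2 / (XX + 1)^2"
  proof -
    have e1: "XX + inverse XX - 2 = (XX - 1)^2 / XX" by (simp add: field_simps power2_eq_square)
    have e2: "XX + inverse XX + 2 = (XX + 1)^2 / XX" by (simp add: field_simps power2_eq_square)
    show ?thesis unfolding e1 e2 by simp
  qed
  also have "\<dots> = mi^2" by (simp add: mi_def power_divide)
  finally have F5: "psi (XX + inverse XX) wm = mi^2" .
  have "psi (- XX) R = psi km r" unfolding R_def by (rule psi_psi') (simp_all add: F1)
  also have "\<dots> = psi mo (psi (inverse XX) r)" by (rule psi_psi'[symmetric]) (simp_all add: F2)
  also have "\<dots> = R" using assms R_def by simp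
  finally obtain S where S: "R = psi (XX^2) S" using inv1 by blast
  have "r = psi (psi mi mo) r" using F3 by simp
  also have "\<dots> = psi mi R" unfolding R_def by (rule psi_psi'[symmetric]) (simp_all add: F3)
  also have "\<dots> = psi (mi^2) S" unfolding S by (rule psi_psi') (simp_all add: F4)
  also have "\<dots> = psi (XX + inverse XX) (psi wm S)" by (rule psi_psi'[symmetric]) (simp_all add: F5)
  finally show ?thesis by blast
qed

lemma inv3:
  assumes "psi (- inverse XX) r = r"
  shows "\<exists>s. r = psi (XX - inverse XX) s"
proof -
  have nc1: "nconst (- inverse XX)"
    by (rule nconst_frac[of _ "[:0,1:]" "-1"]) (simp_all add: rpoly_pCons one_pCons)
  define R where "R = psi (rc \<i> * XX) r"
  have G1: "psi (inverse XX) (rc \<i> * XX) = rc \<i> * inverse XX" by simp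
  have "psi (rc \<i> * XX) (- inverse XX) = - inverse (rc \<i> * XX)" using nconst_iX by simp
  also have "\<dots> = rc \<i> * inverse XX" by (simp add: field_simps)
  finally have G2: "psi (rc \<i> * XX) (- inverse XX) = rc \<i> * inverse XX" .
  have G3: "psi (- (rc \<i> * XX)) (rc \<i> * XX) = XX"
  proof -
    have "psi (- (rc \<i> * XX)) (rc \<i> * XX) = rc \<i> * (- (rc \<i> * XX))" using nconst_miX by simp
    also have "\<dots> = XX" by (simp add: algebra_simps flip: mult.assoc)
    finally show ?thesis .
  qed
  have G4: "psi (- (rc \<i> * XX)) (XX + inverse XX) = psi (XX - inverse XX) (- (rc \<i> * XX))"
  proof -
    have "psi (- (rc \<i> * XX)) (XX + inverse XX) = - (rc \<i> * XX) + inverse (- (rc \<i> * XX))"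
      using nconst_miX by simp
    also have "\<dots> = - (rc \<i> * (XX - inverse XX))" by (simp add: field_simps)
    also have "\<dots> = psi (XX - inverse XX) (- (rc \<i> * XX))" using nconst_t2 by simp
    finally show ?thesis .
  qed
  have ncE0: "nconst (- (rc \<i> * (XX - inverse XX)))"
      by (rule nconst_frac[of _ "[:0,1:]" "[:\<i>,0,-\<i>:]"])
         (simp_all add: rpoly_pCons field_simps)
  have ncE: "nconst (psi (XX - inverse XX) (- (rc \<i> * XX)))"
  proof -
    have e: "psi (XX - inverse XX) (- (rc \<i> * XX)) = - (rc \<i> * (XX - inverse XX))"
      using nconst_t2 by simp
    show ?thesis unfolding e by (rule ncE0)
  qed
  have "psi (inverse XX) R = psi (rc \<i> * inverse XX) r" unfolding R_def
    by (rule psi_psi') (simp_all add: G1)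
  also have "\<dots> = psi (rc \<i> * XX) (psi (- inverse XX) r)"
    by (rule psi_psi'[symmetric]) (simp_all add: G2 nc1)
  also have "\<dots> = R" using assms R_def by simp
  finally obtain S where S: "R = psi (XX + inverse XX) S" using inv2 by blast
  have "r = psi (psi (- (rc \<i> * XX)) (rc \<i> * XX)) r" using G3 by simp
  also have "\<dots> = psi (- (rc \<i> * XX)) R" unfolding R_def by (rule psi_psi'[symmetric]) (simp_all add: G3)
  also have "\<dots> = psi (psi (- (rc \<i> * XX)) (XX + inverse XX)) S" unfolding S
    by (rule psi_psi') (simp_all add: G4 ncE del: psi_add psi_inverse psi_minus psi_mult)
  also have "\<dots> = psi (XX - inverse XX) (psi (- (rc \<i> * XX)) S)" unfolding G4
    by (rule psi_psi'[symmetric]) (simp_all add: ncE ncE0)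
  finally show ?thesis by blast
qed

lemma inv4:
  assumes "psi (- XX) r = r" "psi (inverse XX) r = r"
  shows "\<exists>s. r = psi (XX^2 + inverse (XX^2)) s"
proof -
  obtain S where S: "r = psi (XX^2) S" using inv1 assms(1) by blast
  have "psi (XX^2) (psi (inverse XX) S) = psi (inverse (XX^2)) S"
    by (rule psi_psi') simp_all
  also have "\<dots> = psi (inverse XX) r" unfolding S
    by (rule psi_psi'[symmetric]) (simp_all add: power_inverse)
  also have "\<dots> = psi (XX^2) S" using assms(2) S by simp
  finally have "psi (inverse XX) S = S" using psi_inj[OF nconst_XX2] by blast
  then obtain T where T: "S = psi (XX + inverse XX) T" using inv2 by blast
  have "r = psi (XX^2 + inverse (XX^2)) T" unfolding S T
    by (rule psi_psi') simp_all
  then show ?thesis by blast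
qed


lemma FF_simps [simp]:
  "carrier (FF g) = UNIV" "monoid.mult (FF g) = ff_mult g" "one (FF g) = (1, 0)"
  "zero (FF g) = (0, 0)" "add (FF g) = ff_add"
  by (simp_all add: FF_def)

lemma ff_mult_simp [simp]: "ff_mult g (a, b) (c, d) = (a * c + rpoly g * b * d, a * d + b * c)"
  by (simp add: ff_mult_def)
lemma ff_add_simp [simp]: "ff_add (a, b) (c, d) = (a + c, b + d)"
  by (simp add: ff_add_def)

lemma FF_cring: "cring (FF g)"
proof (rule cringI)
  show "abelian_group (FF g)"
  proof (rule abelian_groupI)
    fix x y z :: ffel
    show "x \<oplus>\<^bsub>FF g\<^esub> y \<oplus>\<^bsub>FF g\<^esub> z = x \<oplus>\<^bsub>FF g\<^esub> (y \<oplus>\<^bsub>FF g\<^esub> z)"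
      by (cases x; cases y; cases z) (simp add: algebra_simps)
    show "x \<oplus>\<^bsub>FF g\<^esub> y = y \<oplus>\<^bsub>FF g\<^esub> x"
      by (cases x; cases y) (simp add: algebra_simps)
    show "\<zero>\<^bsub>FF g\<^esub> \<oplus>\<^bsub>FF g\<^esub> x = x" by (cases x) simp
    show "\<exists>y\<in>carrier (FF g). y \<oplus>\<^bsub>FF g\<^esub> x = \<zero>\<^bsub>FF g\<^esub>"
      by (cases x) (rule bexI[of _ "(- fst x, - snd x)"], auto)
  qed auto
  show "comm_monoid (FF g)"
  proof (rule comm_monoidI)
    fix x y z :: ffel
    show "x \<otimes>\<^bsub>FF g\<^esub> y \<otimes>\<^bsub>FF g\<^esub> z = x \<otimes>\<^bsub>FF g\<^esub> (y \<otimes>\<^bsub>FF g\<^esub> z)"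
      by (cases x; cases y; cases z) (simp add: algebra_simps)
    show "x \<otimes>\<^bsub>FF g\<^esub> y = y \<otimes>\<^bsub>FF g\<^esub> x"
      by (cases x; cases y) (simp add: algebra_simps)
    show "\<one>\<^bsub>FF g\<^esub> \<otimes>\<^bsub>FF g\<^esub> x = x" by (cases x) simp
  qed auto
  fix x y z :: ffel
  show "(x \<oplus>\<^bsub>FF g\<^esub> y) \<otimes>\<^bsub>FF g\<^esub> z = x \<otimes>\<^bsub>FF g\<^esub> z \<oplus>\<^bsub>FF g\<^esub> y \<otimes>\<^bsub>FF g\<^esub> z"
    by (cases x; cases y; cases z) (simp add: algebra_simps)
qed

lemma FF_ring: "ring (FF g)"
  using FF_cring cring.axioms(1) by blast

lemma FF_a_inv [simp]: "a_inv (FF g) (a, b) = (- a, - b)"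
proof -
  interpret cring "FF g" by (rule FF_cring)
  have "(- a, - b) \<oplus>\<^bsub>FF g\<^esub> (a, b) = \<zero>\<^bsub>FF g\<^esub>" by simp
  then show ?thesis by (metis UNIV_I FF_simps(1) minus_equality)
qed

lemma FF_a_minus [simp]: "a_minus (FF g) (a, b) (c, d) = (a - c, b - d)"
  by (simp add: a_minus_def)

definition HH :: "rfun \<Rightarrow> rfun \<Rightarrow> ffel \<Rightarrow> ffel" where
  "HH t e u = (psi t (fst u), e * psi t (snd u))"

lemma quotient_crit:
  assumes t: "nconst t" and e: "e \<noteq> 0" and g: "psi t (rpoly g) = e^2 * rpoly f"
    and fx: "\<And>z. (\<forall>s\<in>G. s z = z) \<longleftrightarrow> ((\<exists>a. fst z = psi t a) \<and> (\<exists>b. snd z = e * psi t b))"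
  shows "quotient_has_eq f G g"
proof -
  let ?Q = "quot_field f G"
  have Qc: "carrier ?Q = {z. \<forall>s\<in>G. s z = z}" by (simp add: quot_field_def)
  have Qm: "monoid.mult ?Q = ff_mult f" "add ?Q = ff_add" "one ?Q = (1,0)"
    by (simp_all add: quot_field_def)
  have H: "HH t e \<in> ring_iso (FF g) ?Q"
  proof (rule ring_iso_memI)
    fix x assume "x \<in> carrier (FF g)"
    show "HH t e x \<in> carrier ?Q" unfolding Qc using fx by (auto simp: HH_def)
  next
    fix x y assume "x \<in> carrier (FF g)" "y \<in> carrier (FF g)"
    show "HH t e (x \<otimes>\<^bsub>FF g\<^esub> y) = HH t e x \<otimes>\<^bsub>?Q\<^esub> HH t e y"
      using t g unfolding Qm
      by (cases x; cases y) (simp add: HH_def algebra_simps power2_eq_square)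
    show "HH t e (x \<oplus>\<^bsub>FF g\<^esub> y) = HH t e x \<oplus>\<^bsub>?Q\<^esub> HH t e y"
      using t unfolding Qm
      by (cases x; cases y) (simp add: HH_def algebra_simps)
  next
    show "HH t e \<one>\<^bsub>FF g\<^esub> = \<one>\<^bsub>?Q\<^esub>" using t unfolding Qm by (simp add: HH_def)
  next
    show "bij_betw (HH t e) (carrier (FF g)) (carrier ?Q)"
      unfolding bij_betw_def
    proof
      show "inj_on (HH t e) (carrier (FF g))"
        using psi_inj[OF t] e by (auto simp: inj_on_def HH_def prod_eq_iff)
      show "HH t e ` carrier (FF g) = carrier ?Q"
      proof
        show "HH t e ` carrier (FF g) \<subseteq> carrier ?Q" unfolding Qc using fx by (auto simp: HH_def)
        show "carrier ?Q \<subseteq> HH t e ` carrier (FF g)"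
        proof
          fix z assume "z \<in> carrier ?Q"
          then obtain a b where "fst z = psi t a" "snd z = e * psi t b" unfolding Qc using fx by blast
          then have "z = HH t e (a, b)" by (simp add: HH_def prod_eq_iff)
          then show "z \<in> HH t e ` carrier (FF g)" by simp
        qed
      qed
    qed
  qed
  define h where "h = inv_into (carrier (FF g)) (HH t e)"
  have "h \<in> ring_iso ?Q (FF g)" unfolding h_def by (rule ring_iso_set_sym[OF FF_ring H])
  moreover have "h (cst c) = cst c" for c
  proof -
    have "HH t e (cst c) = cst c" using t by (simp add: HH_def cst_def flip: rc_def)
    moreover have "inj_on (HH t e) (carrier (FF g))" using H by (simp add: ring_iso_def bij_betw_def)
    ultimately show ?thesis unfolding h_def by (metis UNIV_I FF_simps(1) inv_into_f_f)
  qed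
  ultimately show ?thesis unfolding quotient_has_eq_def by blast
qed


lemma aut_hom:
  assumes "curve_aut f s"
  shows "s (ff_mult f u v) = ff_mult f (s u) (s v)" "s (ff_add u v) = ff_add (s u) (s v)"
    "s (1, 0) = (1, 0)" "s (cst c) = cst c"
proof -
  have h: "s \<in> ring_hom (FF f) (FF f)" using assms by (simp add: curve_aut_def ring_iso_def)
  show "s (ff_mult f u v) = ff_mult f (s u) (s v)" using ring_hom_mult[OF h, of u v] by simp
  show "s (ff_add u v) = ff_add (s u) (s v)" using ring_hom_add[OF h, of u v] by simp
  show "s (1, 0) = (1, 0)" using ring_hom_one[OF h] by simp
  show "s (cst c) = cst c" using assms by (simp add: curve_aut_def)
qed

lemma aut_rfun:
  assumes s: "curve_aut f s" and x: "s xx = (t, 0)" and t: "nconst t"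
  shows "s (r, 0) = (psi t r, 0)"
proof -
  have pol: "s (rpoly p, 0) = (ev t p, 0)" for p
  proof (induct p)
    case 0
    have "s (0, 0) = s (cst 0)" by (simp add: cst_def)
    then show ?case using aut_hom(4)[OF s, of 0] by (simp add: cst_def)
  next
    case (pCons c p)
    have "(rpoly (pCons c p), 0) = ff_add (cst c) (ff_mult f xx (rpoly p, 0))"
      by (simp add: cst_def xx_def rpoly_pCons flip: rc_def XX_def)
    then have "s (rpoly (pCons c p), 0) = ff_add (cst c) (ff_mult f (t, 0) (ev t p, 0))"
      using aut_hom[OF s] x pCons(2) by simp
    then show ?case by (simp add: cst_def flip: rc_def)
  qed
  show ?thesis
  proof (cases r)
    case (Fract p q)
    have "ff_mult f (rpoly q, 0) (r, 0) = (rpoly p, 0)" using Fract by (simp add: Fract_rpoly)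
    then have "ff_mult f (ev t q, 0) (s (r, 0)) = (ev t p, 0)"
      using aut_hom(1)[OF s, of "(rpoly q, 0)" "(r, 0)"] pol by simp
    moreover have "ev t q \<noteq> 0" using ev_nonzero[OF t] Fract by simp
    ultimately show ?thesis using Fract t
      by (cases "s (r, 0)") (auto simp: psi_Fract field_simps)
  qed
qed

lemma aut_full:
  assumes s: "curve_aut f s" and x: "s xx = (t, 0)" and t: "nconst t" and y: "s (0, 1) = (a, b)"
  shows "s (r0, r1) = (psi t r0 + psi t r1 * a, psi t r1 * b)"
proof -
  have "(r0, r1) = ff_add (r0, 0) (ff_mult f (r1, 0) (0, 1))" by simp
  then have "s (r0, r1) = ff_add (s (r0, 0)) (ff_mult f (s (r1, 0)) (s (0, 1)))"
    using aut_hom[OF s] by metis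
  then show ?thesis using aut_rfun[OF s x t] y by simp
qed

definition nsq :: "complex poly \<Rightarrow> bool" where "nsq f \<longleftrightarrow> (\<forall>r. r * r \<noteq> rpoly f)"

lemma aut_y:
  assumes s: "curve_aut f s" and x: "s xx = (t, 0)" and t: "nconst t"
  shows "ff_mult f (s (0, 1)) (s (0, 1)) = (psi t (rpoly f), 0)"
proof -
  have "ff_mult f (0, 1) (0, 1) = (rpoly f, 0)" by simp
  then show ?thesis using aut_hom(1)[OF s, of "(0,1)" "(0,1)"] aut_rfun[OF s x t] by simp
qed

lemma sq1: "(b::rfun) * b = 1 \<Longrightarrow> b = 1 \<or> b = -1"
proof -
  assume "b * b = 1"
  then have "(b - 1) * (b + 1) = 0" by (simp add: algebra_simps)
  then show ?thesis by (auto simp: eq_neg_iff_add_eq_0)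
qed

lemma sigma_form:
  assumes s: "curve_aut f s" and x: "s xx = (- XX, 0)" and ns: "nsq f"
    and ev: "psi (- XX) (rpoly f) = rpoly f"
  shows "\<exists>\<epsilon>. (\<epsilon> = 1 \<or> \<epsilon> = -1) \<and> (\<forall>r0 r1. s (r0, r1) = (psi (- XX) r0, \<epsilon> * psi (- XX) r1))"
proof -
  obtain a b where ab: "s (0, 1) = (a, b)" by (cases "s (0, 1)")
  have e: "a * a + rpoly f * b * b = rpoly f" "a * b + b * a = 0"
    using aut_y[OF s x] ab ev by simp_all
  then have "2 * (a * b) = 0" by (simp add: algebra_simps)
  then have "a = 0 \<or> b = 0" by simp
  moreover have "b \<noteq> 0" using e(1) ns by (auto simp: nsq_def)
  ultimately have a0: "a = 0" by blast
  with e(1) have "rpoly f * (b * b) = rpoly f * 1" by (simp add: algebra_simps)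
  moreover have "rpoly f \<noteq> 0" using ns by (auto simp: nsq_def)
  ultimately have "b * b = 1" by simp
  then have "b = 1 \<or> b = -1" by (rule sq1)
  moreover have "s (r0, r1) = (psi (- XX) r0, b * psi (- XX) r1)" for r0 r1
    using aut_full[OF s x _ ab] a0 by (simp add: mult.commute)
  ultimately show ?thesis by blast
qed

lemma tau_form:
  assumes s: "curve_aut f s" and x: "s xx = (inverse XX, 0)" and ns: "nsq f"
    and ev: "psi (inverse XX) (rpoly f) = rpoly f / XX^8"
  shows "\<exists>\<epsilon>. (\<epsilon> = 1 \<or> \<epsilon> = -1) \<and>
     (\<forall>r0 r1. s (r0, r1) = (psi (inverse XX) r0, \<epsilon> * psi (inverse XX) r1 / XX^4))"
proof -
  obtain a b where ab: "s (0, 1) = (a, b)" by (cases "s (0, 1)")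
  have e: "a * a + rpoly f * b * b = rpoly f / XX^8" "a * b + b * a = 0"
    using aut_y[OF s x] ab ev by simp_all
  then have "2 * (a * b) = 0" by (simp add: algebra_simps)
  then have "a = 0 \<or> b = 0" by simp
  moreover have "b \<noteq> 0"
  proof
    assume "b = 0"
    then have "(a * XX^4) * (a * XX^4) = rpoly f" using e(1) by (simp add: field_simps)
    then show False using ns by (auto simp: nsq_def)
  qed
  ultimately have a0: "a = 0" by blast
  moreover have "rpoly f \<noteq> 0" using ns by (auto simp: nsq_def)
  ultimately have "b * b = 1 / XX^8" using e(1) by (simp add: field_simps)
  then have "(b * XX^4) * (b * XX^4) = 1" by (simp add: field_simps)
  then have "b * XX^4 = 1 \<or> b * XX^4 = -1" by (rule sq1)
  then obtain \<epsilon> where eps: "\<epsilon> = 1 \<or> \<epsilon> = -1" "b = \<epsilon> / XX^4" by (auto simp: field_simps)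
  have "s (r0, r1) = (psi (inverse XX) r0, \<epsilon> * psi (inverse XX) r1 / XX^4)" for r0 r1
    using aut_full[OF s x _ ab] a0 eps by simp
  with eps show ?thesis by blast
qed


lemma nconst_minv [simp]: "nconst (- inverse XX)"
  by (rule nconst_frac[of _ "[:0,1:]" "-1"]) (simp_all add: rpoly_pCons one_pCons)

lemma I1: "psi (- XX) r = r \<longleftrightarrow> (\<exists>a. r = psi (XX^2) a)"
proof
  assume "psi (- XX) r = r" then show "\<exists>a. r = psi (XX^2) a" by (rule inv1)
next
  assume "\<exists>a. r = psi (XX^2) a"
  then obtain a where "r = psi (XX^2) a" by blast
  then show "psi (- XX) r = r" using psi_psi'[of "XX^2" "- XX" "XX^2" a] by simp
qed

lemma I2: "psi (inverse XX) r = r \<longleftrightarrow> (\<exists>a. r = psi (XX + inverse XX) a)"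
proof
  assume "psi (inverse XX) r = r" then show "\<exists>a. r = psi (XX + inverse XX) a" by (rule inv2)
next
  assume "\<exists>a. r = psi (XX + inverse XX) a"
  then obtain a where "r = psi (XX + inverse XX) a" by blast
  then show "psi (inverse XX) r = r"
    using psi_psi'[of "XX + inverse XX" "inverse XX" "XX + inverse XX" a] by (simp add: add.commute)
qed

lemma I3: "psi (- inverse XX) r = r \<longleftrightarrow> (\<exists>a. r = psi (XX - inverse XX) a)"
proof
  assume "psi (- inverse XX) r = r" then show "\<exists>a. r = psi (XX - inverse XX) a" by (rule inv3)
next
  assume "\<exists>a. r = psi (XX - inverse XX) a"
  then obtain a where "r = psi (XX - inverse XX) a" by blast
  then show "psi (- inverse XX) r = r"
    using psi_psi'[of "XX - inverse XX" "- inverse XX" "XX - inverse XX" a] by simp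
qed

lemma I4: "psi (- XX) r = r \<and> psi (inverse XX) r = r \<longleftrightarrow> (\<exists>a. r = psi (XX^2 + inverse (XX^2)) a)"
proof
  assume "psi (- XX) r = r \<and> psi (inverse XX) r = r"
  then show "\<exists>a. r = psi (XX^2 + inverse (XX^2)) a" using inv4 by blast
next
  assume "\<exists>a. r = psi (XX^2 + inverse (XX^2)) a"
  then obtain a where "r = psi (XX^2 + inverse (XX^2)) a" by blast
  then show "psi (- XX) r = r \<and> psi (inverse XX) r = r"
    using psi_psi'[of "XX^2 + inverse (XX^2)" "- XX" "XX^2 + inverse (XX^2)" a]
      psi_psi'[of "XX^2 + inverse (XX^2)" "inverse XX" "XX^2 + inverse (XX^2)" a]
    by (simp_all add: power_inverse add.commute)
qed

lemma twist:
  assumes u: "nconst u" and e: "e \<noteq> 0" and k: "psi u e = k * e"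
  shows "psi u r = k * r \<longleftrightarrow> psi u (r / e) = r / e"
proof -
  have "psi u e \<noteq> 0" using psi_inj[OF u, of e 0] e u by auto
  then have k0: "k \<noteq> 0" using k by auto
  show ?thesis
  proof
    assume h: "psi u r = k * r"
    have "psi u (r / e) = psi u r / (k * e)" using u k by simp
    then show "psi u (r / e) = r / e" using h k0 e by simp
  next
    assume h: "psi u (r / e) = r / e"
    have "psi u r = psi u ((r / e) * e)" using e by simp
    also have "\<dots> = r / e * (k * e)" by (simp only: psi_mult[OF u] h k)
    finally show "psi u r = k * r" using e by simp
  qed
qed

lemma ex_div: "e \<noteq> 0 \<Longrightarrow> (\<exists>b. r = e * psi t b) \<longleftrightarrow> (\<exists>b. r / e = psi t b)"
  by (auto simp: field_simps)

definition fpoly :: "complex \<Rightarrow> complex \<Rightarrow> complex poly" where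
  "fpoly a b = [:1, 0, a, 0, 1:] * [:1, 0, b, 0, 1:]"

definition PP :: "complex \<Rightarrow> rfun" where "PP a = XX^4 + rc a * XX^2 + 1"

declare ev_pCons [simp del]
lemma ev4 [simp]: "ev t [:1, 0, a, 0, 1:] = t^4 + rc a * t^2 + 1"
  by (simp add: ev_pCons algebra_simps power2_eq_square power4_eq_xxxx)
lemma ev3 [simp]: "ev t [:c0, c1, c2:] = rc c0 + rc c1 * t + rc c2 * t^2"
  by (simp add: ev_pCons algebra_simps power2_eq_square)
lemma ev2 [simp]: "ev t [:c0, c1:] = rc c0 + rc c1 * t"
  by (simp add: ev_pCons algebra_simps)

lemma rpoly_f: "rpoly (fpoly a b) = PP a * PP b"
  unfolding fpoly_def PP_def ev_XX[symmetric] ev_mult ev4 ..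


lemma r1_crit:
  assumes u: "nconst u" and e: "e \<noteq> 0" and k: "psi u e = k * e"
    and inv: "\<And>r. psi u r = r \<longleftrightarrow> (\<exists>a. r = psi t a)"
  shows "psi u r = k * r \<longleftrightarrow> (\<exists>b. r = e * psi t b)"
  using twist[OF u e k, of r] inv[of "r / e"] ex_div[OF e, of r t] by simp

lemma r1_crit2:
  assumes u1: "nconst u1" and u2: "nconst u2" and e: "e \<noteq> 0"
    and k1: "psi u1 e = k1 * e" and k2: "psi u2 e = k2 * e"
    and inv: "\<And>r. psi u1 r = r \<and> psi u2 r = r \<longleftrightarrow> (\<exists>a. r = psi t a)"
  shows "psi u1 r = k1 * r \<and> psi u2 r = k2 * r \<longleftrightarrow> (\<exists>b. r = e * psi t b)"
  using twist[OF u1 e k1, of r] twist[OF u2 e k2, of r] inv[of "r / e"] ex_div[OF e, of r t] by simp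

lemma fix1: "(\<forall>s\<in>{s1}. s z = z) \<longleftrightarrow> s1 z = z" by simp
lemma fix2: "(\<forall>s\<in>{s1, s2}. s z = z) \<longleftrightarrow> s1 z = z \<and> s2 z = z" by simp

lemma hyp_inv_simp [simp]: "hyp_inv (r0, r1) = (r0, - r1)" by (simp add: hyp_inv_def)

lemma AB: "psi (- XX) (psi (inverse XX) r) = psi (- inverse XX) r"
  by (rule psi_psi') simp_all

lemma A_XX4 [simp]: "psi (- XX) (XX^4) = XX^4"
  by simp

lemma case5:
  assumes hs: "\<And>r0 r1. \<sigma> (r0, r1) = (psi (- XX) r0, psi (- XX) r1)"
  shows "quotient_has_eq (fpoly a b) {\<sigma>} ([:1, a, 1:] * [:1, b, 1:])"
proof (rule quotient_crit[where t = "XX^2" and e = 1])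
  show "psi (XX^2) (rpoly ([:1, a, 1:] * [:1, b, 1:])) = 1^2 * rpoly (fpoly a b)"
    unfolding psi_rpoly[OF nconst_XX2] ev_mult ev3 ev2 rpoly_f PP_def
    by (simp add: algebra_simps power2_eq_square power4_eq_xxxx)
  fix z :: ffel
  obtain r0 r1 where z: "z = (r0, r1)" by (cases z)
  have c1: "psi (- XX) r1 = 1 * r1 \<longleftrightarrow> (\<exists>b. r1 = 1 * psi (XX^2) b)"
    by (rule r1_crit) (simp_all add: I1)
  show "(\<forall>s\<in>{\<sigma>}. s z = z) \<longleftrightarrow> (\<exists>a. fst z = psi (XX^2) a) \<and> (\<exists>b. snd z = 1 * psi (XX^2) b)"
    using c1 by (simp add: z hs I1[symmetric])
qed simp_all

lemma case2:
  assumes hs: "\<And>r0 r1. \<sigma> (r0, r1) = (psi (- XX) r0, psi (- XX) r1)"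
  shows "quotient_has_eq (fpoly a b) {hyp_inv \<circ> \<sigma>} ([:0, 1:] * [:1, a, 1:] * [:1, b, 1:])"
proof (rule quotient_crit[where t = "XX^2" and e = XX])
  show "psi (XX^2) (rpoly ([:0, 1:] * [:1, a, 1:] * [:1, b, 1:])) = XX^2 * rpoly (fpoly a b)"
    unfolding psi_rpoly[OF nconst_XX2] ev_mult ev3 ev2 rpoly_f PP_def
    by (simp add: algebra_simps power2_eq_square power4_eq_xxxx)
  fix z :: ffel
  obtain r0 r1 where z: "z = (r0, r1)" by (cases z)
  have c1: "psi (- XX) r1 = -1 * r1 \<longleftrightarrow> (\<exists>b. r1 = XX * psi (XX^2) b)"
    by (rule r1_crit) (simp_all add: I1)
  show "(\<forall>s\<in>{hyp_inv \<circ> \<sigma>}. s z = z) \<longleftrightarrow> (\<exists>a. fst z = psi (XX^2) a) \<and> (\<exists>b. snd z = XX * psi (XX^2) b)"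
    using c1 by (auto simp: z hs I1[symmetric] minus_equation_iff[of "psi _ _"])
qed simp_all

lemma div4: "(x / XX^4 = y) \<longleftrightarrow> (x = XX^4 * y)"
  by (simp add: divide_eq_eq mult.commute)
lemma mdiv4: "(- (x / XX^4) = y) \<longleftrightarrow> (x = - (XX^4 * y))"
proof -
  have "- (x / XX^4) = y \<longleftrightarrow> x / XX^4 = - y" by auto
  also have "\<dots> \<longleftrightarrow> x = XX^4 * (- y)" by (rule div4)
  finally show ?thesis by simp
qed

lemma XXI [simp]: "XX * inverse XX = 1" "inverse XX * XX = 1"
  by simp_all
lemma sqP: "(XX + inverse XX)^2 = XX^2 + 2 + (inverse XX)^2"
  by (simp add: power2_eq_square algebra_simps)
lemma sqM: "(XX - inverse XX)^2 = XX^2 - 2 + (inverse XX)^2"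
  by (simp add: power2_eq_square algebra_simps)
lemma invXX2: "inverse (XX^2) = (inverse XX)^2"
  by (simp add: power_inverse)
lemma PPdiv: "PP a / XX^2 = XX^2 + rc a + (inverse XX)^2"
proof -
  have "PP a = (XX^2 + rc a + (inverse XX)^2) * XX^2"
    unfolding PP_def by (simp add: algebra_simps power2_eq_square power4_eq_xxxx)
  then show ?thesis by simp
qed

lemma fA: "rc (a - 2) + rc 0 * (XX + inverse XX) + rc 1 * (XX + inverse XX)^2 = PP a / XX^2"
  by (simp add: PPdiv sqP)
lemma fB: "rc (a + 2) + rc 0 * (XX - inverse XX) + rc 1 * (XX - inverse XX)^2 = PP a / XX^2"
  by (simp add: PPdiv sqM)
lemma fC: "rc a + rc 1 * (XX^2 + inverse (XX^2)) = PP a / XX^2"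
  by (simp add: PPdiv invXX2)
lemma fD: "rc (-4) + rc 0 * (XX + inverse XX) + rc 1 * (XX + inverse XX)^2 = (XX - inverse XX)^2"
  by (simp add: sqP sqM)
lemma fE: "rc 4 + rc 0 * (XX - inverse XX) + rc 1 * (XX - inverse XX)^2 = (XX + inverse XX)^2"
  by (simp add: sqP sqM)
lemma fF: "rc (-2) + rc 1 * (XX^2 + inverse (XX^2)) = (XX - inverse XX)^2"
  by (simp add: sqM invXX2)
lemma fG: "rc 2 + rc 1 * (XX^2 + inverse (XX^2)) = (XX + inverse XX)^2"
  by (simp add: sqP invXX2)

lemma tPM_nz [simp]: "XX - inverse XX \<noteq> 0" "XX + inverse XX \<noteq> 0"
  using nconst_t2 nconst_t1 unfolding nconst_def by (metis rc_0)+

lemma XX_ne_inv [simp]: "XX \<noteq> inverse XX" "XX \<noteq> - inverse XX" "inverse XX \<noteq> XX" "- inverse XX \<noteq> XX"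
proof -
  have h1: "XX \<noteq> inverse XX" using tPM_nz(1) by auto
  have h2: "XX \<noteq> - inverse XX"
  proof
    assume h: "XX = - inverse XX"
    have "XX + inverse XX = - inverse XX + inverse XX" by (subst h) (rule refl)
    then have "XX + inverse XX = 0" by simp
    then show False using tPM_nz(2) by blast
  qed
  show "XX \<noteq> inverse XX" "XX \<noteq> - inverse XX" "inverse XX \<noteq> XX" "- inverse XX \<noteq> XX"
    using h1 h2 by auto
qed

lemma case4:
  assumes ht: "\<And>r0 r1. \<tau> (r0, r1) = (psi (inverse XX) r0, psi (inverse XX) r1 / XX^4)"
  shows "quotient_has_eq (fpoly a b) {\<tau>} ([:a - 2, 0, 1:] * [:b - 2, 0, 1:])"
proof (rule quotient_crit[where t = "XX + inverse XX" and e = "inverse (XX^2)"])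
  show "psi (XX + inverse XX) (rpoly ([:a - 2, 0, 1:] * [:b - 2, 0, 1:])) = (inverse (XX^2))^2 * rpoly (fpoly a b)"
    unfolding psi_rpoly[OF nconst_t1] ev_mult ev3 fA rpoly_f
    by (simp add: divide_inverse power2_eq_square mult_ac)
  fix z :: ffel
  obtain r0 r1 where z: "z = (r0, r1)" by (cases z)
  have "psi (inverse XX) (inverse (XX^2)) = inverse ((inverse XX)^2)" by simp
  also have "\<dots> = XX^4 * inverse (XX^2)" by (simp add: field_simps power2_eq_square power4_eq_xxxx)
  finally have k: "psi (inverse XX) (inverse (XX^2)) = XX^4 * inverse (XX^2)" .
  have c1: "psi (inverse XX) r1 = XX^4 * r1 \<longleftrightarrow> (\<exists>b. r1 = inverse (XX^2) * psi (XX + inverse XX) b)"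
    by (rule r1_crit) (simp_all only: I2 k nconst_inv_XX inverse_nonzero_iff_nonzero power_not_zero XX_nz(1) not_False_eq_True)
  show "(\<forall>s\<in>{\<tau>}. s z = z) \<longleftrightarrow> (\<exists>a. fst z = psi (XX + inverse XX) a) \<and> (\<exists>b. snd z = inverse (XX^2) * psi (XX + inverse XX) b)"
    using c1 by (simp add: z ht I2[symmetric] div4)
qed simp_all

lemma case1:
  assumes ht: "\<And>r0 r1. \<tau> (r0, r1) = (psi (inverse XX) r0, psi (inverse XX) r1 / XX^4)"
  shows "quotient_has_eq (fpoly a b) {hyp_inv \<circ> \<tau>} ([:-4, 0, 1:] * [:a - 2, 0, 1:] * [:b - 2, 0, 1:])"
proof (rule quotient_crit[where t = "XX + inverse XX" and e = "(XX - inverse XX) / XX^2"])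
  show "psi (XX + inverse XX) (rpoly ([:-4, 0, 1:] * [:a - 2, 0, 1:] * [:b - 2, 0, 1:])) =
      ((XX - inverse XX) / XX^2)^2 * rpoly (fpoly a b)"
    unfolding psi_rpoly[OF nconst_t1] ev_mult ev3 fA fD rpoly_f
    by (simp add: divide_inverse power2_eq_square mult_ac)
  fix z :: ffel
  obtain r0 r1 where z: "z = (r0, r1)" by (cases z)
  have "psi (inverse XX) ((XX - inverse XX) / XX^2) = (inverse XX - XX) / (inverse XX)^2" by simp
  also have "\<dots> = - (XX^4) * ((XX - inverse XX) / XX^2)"
    by (simp add: field_simps power2_eq_square power4_eq_xxxx)
  finally have k: "psi (inverse XX) ((XX - inverse XX) / XX^2) = - (XX^4) * ((XX - inverse XX) / XX^2)" .
  have c1: "psi (inverse XX) r1 = - (XX^4) * r1 \<longleftrightarrow> (\<exists>b. r1 = (XX - inverse XX) / XX^2 * psi (XX + inverse XX) b)"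
    by (rule r1_crit) (simp_all only: I2 k nconst_inv_XX divide_eq_0_iff de_Morgan_conj tPM_nz
        power_not_zero XX_nz(1) not_False_eq_True simp_thms)
  show "(\<forall>s\<in>{hyp_inv \<circ> \<tau>}. s z = z) \<longleftrightarrow> (\<exists>a. fst z = psi (XX + inverse XX) a) \<and>
      (\<exists>b. snd z = (XX - inverse XX) / XX^2 * psi (XX + inverse XX) b)"
    using c1 by (simp add: z ht I2[symmetric] mdiv4)
qed simp_all

lemma st_form:
  assumes hs: "\<And>r0 r1. \<sigma> (r0, r1) = (psi (- XX) r0, psi (- XX) r1)"
    and ht: "\<And>r0 r1. \<tau> (r0, r1) = (psi (inverse XX) r0, psi (inverse XX) r1 / XX^4)"
  shows "\<sigma> (\<tau> (r0, r1)) = (psi (- inverse XX) r0, psi (- inverse XX) r1 / XX^4)"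
  by (simp add: hs ht AB)

lemma case6:
  assumes hs: "\<And>r0 r1. \<sigma> (r0, r1) = (psi (- XX) r0, psi (- XX) r1)"
    and ht: "\<And>r0 r1. \<tau> (r0, r1) = (psi (inverse XX) r0, psi (inverse XX) r1 / XX^4)"
  shows "quotient_has_eq (fpoly a b) {\<sigma> \<circ> \<tau>} ([:a + 2, 0, 1:] * [:b + 2, 0, 1:])"
proof (rule quotient_crit[where t = "XX - inverse XX" and e = "inverse (XX^2)"])
  show "psi (XX - inverse XX) (rpoly ([:a + 2, 0, 1:] * [:b + 2, 0, 1:])) = (inverse (XX^2))^2 * rpoly (fpoly a b)"
    unfolding psi_rpoly[OF nconst_t2] ev_mult ev3 fB rpoly_f
    by (simp add: divide_inverse power2_eq_square mult_ac)
  fix z :: ffel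
  obtain r0 r1 where z: "z = (r0, r1)" by (cases z)
  have "psi (- inverse XX) (inverse (XX^2)) = inverse ((- inverse XX)^2)" by simp
  also have "\<dots> = XX^4 * inverse (XX^2)" by (simp add: field_simps power2_eq_square power4_eq_xxxx)
  finally have k: "psi (- inverse XX) (inverse (XX^2)) = XX^4 * inverse (XX^2)" .
  have c1: "psi (- inverse XX) r1 = XX^4 * r1 \<longleftrightarrow> (\<exists>b. r1 = inverse (XX^2) * psi (XX - inverse XX) b)"
    by (rule r1_crit) (simp_all only: I3 k nconst_minv inverse_nonzero_iff_nonzero power_not_zero XX_nz(1) not_False_eq_True)
  show "(\<forall>s\<in>{\<sigma> \<circ> \<tau>}. s z = z) \<longleftrightarrow> (\<exists>a. fst z = psi (XX - inverse XX) a) \<and> (\<exists>b. snd z = inverse (XX^2) * psi (XX - inverse XX) b)"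
    using c1 by (simp add: z st_form[OF hs ht] I3[symmetric] div4)
qed simp_all

lemma case3:
  assumes hs: "\<And>r0 r1. \<sigma> (r0, r1) = (psi (- XX) r0, psi (- XX) r1)"
    and ht: "\<And>r0 r1. \<tau> (r0, r1) = (psi (inverse XX) r0, psi (inverse XX) r1 / XX^4)"
  shows "quotient_has_eq (fpoly a b) {hyp_inv \<circ> \<sigma> \<circ> \<tau>} ([:4, 0, 1:] * [:a + 2, 0, 1:] * [:b + 2, 0, 1:])"
proof (rule quotient_crit[where t = "XX - inverse XX" and e = "(XX + inverse XX) / XX^2"])
  show "psi (XX - inverse XX) (rpoly ([:4, 0, 1:] * [:a + 2, 0, 1:] * [:b + 2, 0, 1:])) =
      ((XX + inverse XX) / XX^2)^2 * rpoly (fpoly a b)"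
    unfolding psi_rpoly[OF nconst_t2] ev_mult ev3 fB fE rpoly_f
    by (simp add: divide_inverse power2_eq_square mult_ac)
  fix z :: ffel
  obtain r0 r1 where z: "z = (r0, r1)" by (cases z)
  have "psi (- inverse XX) ((XX + inverse XX) / XX^2) = (- inverse XX + inverse (- inverse XX)) / (- inverse XX)^2" by simp
  also have "\<dots> = - (XX^4) * ((XX + inverse XX) / XX^2)"
    by (simp add: field_simps power2_eq_square power4_eq_xxxx)
  finally have k: "psi (- inverse XX) ((XX + inverse XX) / XX^2) = - (XX^4) * ((XX + inverse XX) / XX^2)" .
  have c1: "psi (- inverse XX) r1 = - (XX^4) * r1 \<longleftrightarrow> (\<exists>b. r1 = (XX + inverse XX) / XX^2 * psi (XX - inverse XX) b)"
    by (rule r1_crit) (simp_all only: I3 k nconst_minv divide_eq_0_iff de_Morgan_conj tPM_nz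
        power_not_zero XX_nz(1) not_False_eq_True simp_thms)
  show "(\<forall>s\<in>{hyp_inv \<circ> \<sigma> \<circ> \<tau>}. s z = z) \<longleftrightarrow> (\<exists>a. fst z = psi (XX - inverse XX) a) \<and>
      (\<exists>b. snd z = (XX + inverse XX) / XX^2 * psi (XX - inverse XX) b)"
    using c1 by (simp add: z st_form[OF hs ht] I3[symmetric] mdiv4)
qed simp_all

lemma case7:
  assumes hs: "\<And>r0 r1. \<sigma> (r0, r1) = (psi (- XX) r0, psi (- XX) r1)"
    and ht: "\<And>r0 r1. \<tau> (r0, r1) = (psi (inverse XX) r0, psi (inverse XX) r1 / XX^4)"
  shows "quotient_has_eq (fpoly a b) {hyp_inv \<circ> \<sigma>, hyp_inv \<circ> \<tau>} ([:a, 1:] * [:b, 1:] * [:-2, 1:])"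
proof (rule quotient_crit[where t = "XX^2 + inverse (XX^2)" and e = "(XX - inverse XX) / XX^2"])
  show "psi (XX^2 + inverse (XX^2)) (rpoly ([:a, 1:] * [:b, 1:] * [:-2, 1:])) = ((XX - inverse XX) / XX^2)^2 * rpoly (fpoly a b)"
    unfolding psi_rpoly[OF nconst_t4] ev_mult ev2 unfolding fF unfolding fC rpoly_f
    by (simp add: divide_inverse power2_eq_square mult_ac)
  show "(XX - inverse XX) / XX^2 \<noteq> 0" by (simp add: )
  fix z :: ffel
  obtain r0 r1 where z: "z = (r0, r1)" by (cases z)
  have "psi (- XX) ((XX - inverse XX) / XX^2) = (- XX - inverse (- XX)) / (- XX)^2" by simp
  also have "\<dots> = -1 * ((XX - inverse XX) / XX^2)"
    by (simp add: field_simps power2_eq_square power4_eq_xxxx)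
  finally have kA: "psi (- XX) ((XX - inverse XX) / XX^2) = -1 * ((XX - inverse XX) / XX^2)" .
  have "psi (inverse XX) ((XX - inverse XX) / XX^2) = (inverse XX - XX) / (inverse XX)^2" by simp
  also have "\<dots> = - (XX^4) * ((XX - inverse XX) / XX^2)"
    by (simp add: field_simps power2_eq_square power4_eq_xxxx)
  finally have kB: "psi (inverse XX) ((XX - inverse XX) / XX^2) = - (XX^4) * ((XX - inverse XX) / XX^2)" .
  have c0: "psi (- XX) r0 = r0 \<and> psi (inverse XX) r0 = r0 \<longleftrightarrow> (\<exists>a. r0 = psi (XX^2 + inverse (XX^2)) a)"
    by (rule I4)
  have c1: "psi (- XX) r1 = -1 * r1 \<and> psi (inverse XX) r1 = - (XX^4) * r1 \<longleftrightarrow>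
      (\<exists>b. r1 = (XX - inverse XX) / XX^2 * psi (XX^2 + inverse (XX^2)) b)"
    by (rule r1_crit2[OF nconst_neg_XX nconst_inv_XX _ kA kB I4]) (simp add: )
  have "(\<forall>s\<in>{hyp_inv \<circ> \<sigma>, hyp_inv \<circ> \<tau>}. s z = z) \<longleftrightarrow>
      (psi (- XX) r0 = r0 \<and> psi (inverse XX) r0 = r0) \<and>
      (psi (- XX) r1 = -1 * r1 \<and> psi (inverse XX) r1 = - (XX^4) * r1)"
    by (auto simp: z hs ht div4 mdiv4 minus_equation_iff[of "psi _ _"])
  then show "(\<forall>s\<in>{hyp_inv \<circ> \<sigma>, hyp_inv \<circ> \<tau>}. s z = z) \<longleftrightarrow> (\<exists>a. fst z = psi (XX^2 + inverse (XX^2)) a) \<and>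
      (\<exists>b. snd z = (XX - inverse XX) / XX^2 * psi (XX^2 + inverse (XX^2)) b)"
    using c0 c1 by (simp add: z)
qed simp

lemma case8:
  assumes hs: "\<And>r0 r1. \<sigma> (r0, r1) = (psi (- XX) r0, psi (- XX) r1)"
    and ht: "\<And>r0 r1. \<tau> (r0, r1) = (psi (inverse XX) r0, psi (inverse XX) r1 / XX^4)"
  shows "quotient_has_eq (fpoly a b) {hyp_inv \<circ> \<tau>, \<sigma>} ([:a, 1:] * [:b, 1:] * [:-2, 1:] * [:2, 1:])"
proof (rule quotient_crit[where t = "XX^2 + inverse (XX^2)" and e = "(XX - inverse XX) * (XX + inverse XX) / XX^2"])
  show "psi (XX^2 + inverse (XX^2)) (rpoly ([:a, 1:] * [:b, 1:] * [:-2, 1:] * [:2, 1:])) = ((XX - inverse XX) * (XX + inverse XX) / XX^2)^2 * rpoly (fpoly a b)"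
    unfolding psi_rpoly[OF nconst_t4] ev_mult ev2 unfolding fF fG unfolding fC rpoly_f
    by (simp add: divide_inverse power2_eq_square mult_ac)
  show "(XX - inverse XX) * (XX + inverse XX) / XX^2 \<noteq> 0" by (simp add: )
  fix z :: ffel
  obtain r0 r1 where z: "z = (r0, r1)" by (cases z)
  have "psi (- XX) ((XX - inverse XX) * (XX + inverse XX) / XX^2) = (- XX - inverse (- XX)) * (- XX + inverse (- XX)) / (- XX)^2" by simp
  also have "\<dots> = 1 * ((XX - inverse XX) * (XX + inverse XX) / XX^2)"
    by (simp add: field_simps power2_eq_square power4_eq_xxxx)
  finally have kA: "psi (- XX) ((XX - inverse XX) * (XX + inverse XX) / XX^2) = 1 * ((XX - inverse XX) * (XX + inverse XX) / XX^2)" .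
  have "psi (inverse XX) ((XX - inverse XX) * (XX + inverse XX) / XX^2) = (inverse XX - XX) * (inverse XX + XX) / (inverse XX)^2" by simp
  also have "\<dots> = - (XX^4) * ((XX - inverse XX) * (XX + inverse XX) / XX^2)"
    by (simp add: field_simps power2_eq_square power4_eq_xxxx)
  finally have kB: "psi (inverse XX) ((XX - inverse XX) * (XX + inverse XX) / XX^2) = - (XX^4) * ((XX - inverse XX) * (XX + inverse XX) / XX^2)" .
  have c0: "psi (- XX) r0 = r0 \<and> psi (inverse XX) r0 = r0 \<longleftrightarrow> (\<exists>a. r0 = psi (XX^2 + inverse (XX^2)) a)"
    by (rule I4)
  have c1: "psi (- XX) r1 = 1 * r1 \<and> psi (inverse XX) r1 = - (XX^4) * r1 \<longleftrightarrow>
      (\<exists>b. r1 = (XX - inverse XX) * (XX + inverse XX) / XX^2 * psi (XX^2 + inverse (XX^2)) b)"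
    by (rule r1_crit2[OF nconst_neg_XX nconst_inv_XX _ kA kB I4]) (simp add: )
  have "(\<forall>s\<in>{hyp_inv \<circ> \<tau>, \<sigma>}. s z = z) \<longleftrightarrow>
      (psi (- XX) r0 = r0 \<and> psi (inverse XX) r0 = r0) \<and>
      (psi (- XX) r1 = 1 * r1 \<and> psi (inverse XX) r1 = - (XX^4) * r1)"
    by (auto simp: z hs ht div4 mdiv4 minus_equation_iff[of "psi _ _"])
  then show "(\<forall>s\<in>{hyp_inv \<circ> \<tau>, \<sigma>}. s z = z) \<longleftrightarrow> (\<exists>a. fst z = psi (XX^2 + inverse (XX^2)) a) \<and>
      (\<exists>b. snd z = (XX - inverse XX) * (XX + inverse XX) / XX^2 * psi (XX^2 + inverse (XX^2)) b)"
    using c0 c1 by (simp add: z)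
qed simp

lemma case9:
  assumes hs: "\<And>r0 r1. \<sigma> (r0, r1) = (psi (- XX) r0, psi (- XX) r1)"
    and ht: "\<And>r0 r1. \<tau> (r0, r1) = (psi (inverse XX) r0, psi (inverse XX) r1 / XX^4)"
  shows "quotient_has_eq (fpoly a b) {hyp_inv \<circ> \<sigma>, \<tau>} ([:a, 1:] * [:b, 1:] * [:2, 1:])"
proof (rule quotient_crit[where t = "XX^2 + inverse (XX^2)" and e = "(XX + inverse XX) / XX^2"])
  show "psi (XX^2 + inverse (XX^2)) (rpoly ([:a, 1:] * [:b, 1:] * [:2, 1:])) = ((XX + inverse XX) / XX^2)^2 * rpoly (fpoly a b)"
    unfolding psi_rpoly[OF nconst_t4] ev_mult ev2 unfolding fG unfolding fC rpoly_f
    by (simp add: divide_inverse power2_eq_square mult_ac)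
  show "(XX + inverse XX) / XX^2 \<noteq> 0" by (simp add: )
  fix z :: ffel
  obtain r0 r1 where z: "z = (r0, r1)" by (cases z)
  have "psi (- XX) ((XX + inverse XX) / XX^2) = (- XX + inverse (- XX)) / (- XX)^2" by simp
  also have "\<dots> = -1 * ((XX + inverse XX) / XX^2)"
    by (simp add: field_simps power2_eq_square power4_eq_xxxx)
  finally have kA: "psi (- XX) ((XX + inverse XX) / XX^2) = -1 * ((XX + inverse XX) / XX^2)" .
  have "psi (inverse XX) ((XX + inverse XX) / XX^2) = (inverse XX + XX) / (inverse XX)^2" by simp
  also have "\<dots> = XX^4 * ((XX + inverse XX) / XX^2)"
    by (simp add: field_simps power2_eq_square power4_eq_xxxx)
  finally have kB: "psi (inverse XX) ((XX + inverse XX) / XX^2) = XX^4 * ((XX + inverse XX) / XX^2)" .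
  have c0: "psi (- XX) r0 = r0 \<and> psi (inverse XX) r0 = r0 \<longleftrightarrow> (\<exists>a. r0 = psi (XX^2 + inverse (XX^2)) a)"
    by (rule I4)
  have c1: "psi (- XX) r1 = -1 * r1 \<and> psi (inverse XX) r1 = XX^4 * r1 \<longleftrightarrow>
      (\<exists>b. r1 = (XX + inverse XX) / XX^2 * psi (XX^2 + inverse (XX^2)) b)"
    by (rule r1_crit2[OF nconst_neg_XX nconst_inv_XX _ kA kB I4]) (simp add: )
  have "(\<forall>s\<in>{hyp_inv \<circ> \<sigma>, \<tau>}. s z = z) \<longleftrightarrow>
      (psi (- XX) r0 = r0 \<and> psi (inverse XX) r0 = r0) \<and>
      (psi (- XX) r1 = -1 * r1 \<and> psi (inverse XX) r1 = XX^4 * r1)"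
    by (auto simp: z hs ht div4 mdiv4 minus_equation_iff[of "psi _ _"])
  then show "(\<forall>s\<in>{hyp_inv \<circ> \<sigma>, \<tau>}. s z = z) \<longleftrightarrow> (\<exists>a. fst z = psi (XX^2 + inverse (XX^2)) a) \<and>
      (\<exists>b. snd z = (XX + inverse XX) / XX^2 * psi (XX^2 + inverse (XX^2)) b)"
    using c0 c1 by (simp add: z)
qed simp


lemma nsq_f:
  assumes "a \<noteq> 2" "a \<noteq> -2" "a \<noteq> b"
  shows "nsq (fpoly a b)"
proof -
  define F1 where "F1 = [:1, 0, a, 0, 1:]"
  define F2 where "F2 = [:1, 0, b, 0, 1:]"
  define s where "s = csqrt (a^2 - 4)"
  define z where "z = (- a + s) / 2"
  define c where "c = csqrt z"
  have s2: "s^2 = a^2 - 4" unfolding s_def by simp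
  have s0: "s \<noteq> 0"
  proof
    assume "s = 0"
    then have "(a - 2) * (a + 2) = 0" using s2 by (simp add: algebra_simps power2_eq_square)
    then show False using assms by (auto simp: add_eq_0_iff2)
  qed
  have w: "2 * z = s - a" by (simp add: z_def)
  have "4 * (z^2 + a * z + 1) = (2 * z)^2 + 2 * a * (2 * z) + 4"
    by (simp add: power2_eq_square algebra_simps)
  also have "\<dots> = (s - a)^2 + 2 * a * (s - a) + 4" using w by simp
  also have "\<dots> = s^2 - a^2 + 4" by (simp add: power2_eq_square algebra_simps)
  also have "\<dots> = 0" using s2 by simp
  finally have "4 * (z^2 + a * z + 1) = 0" .
  then have zq: "z^2 + a * z + 1 = 0" by (simp only: mult_eq_0_iff) simp
  have z0: "z \<noteq> 0" using zq by auto
  have c2: "c^2 = z" unfolding c_def by simp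
  have c0: "c \<noteq> 0" using c2 z0 by auto
  have p1: "poly F1 c = 0"
  proof -
    have "poly F1 c = (c^2)^2 + a * c^2 + 1" unfolding F1_def by (simp add: algebra_simps power2_eq_square)
    then show ?thesis using zq c2 by simp
  qed
  have p2: "poly F2 c \<noteq> 0"
  proof -
    have "poly F2 c = (c^2)^2 + b * c^2 + 1" unfolding F2_def by (simp add: algebra_simps power2_eq_square)
    also have "\<dots> = (z^2 + a * z + 1) + (b - a) * z" using c2 by (simp add: algebra_simps)
    also have "\<dots> = (b - a) * z" using zq by simp
    finally show ?thesis using z0 assms(3) by simp
  qed
  have pd: "poly (pderiv F1) c \<noteq> 0"
  proof -
    have "poly (pderiv F1) c = 2 * c * (a + 2 * c^2)"
      unfolding F1_def by (simp add: pderiv_pCons algebra_simps power2_eq_square)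
    also have "a + 2 * c^2 = s" using c2 w by (simp add: algebra_simps)
    finally show ?thesis using c0 s0 by simp
  qed
  have F10: "F1 \<noteq> 0" "F2 \<noteq> 0" by (simp_all add: F1_def F2_def)
  have o1: "order c F1 = 1"
    using order_pderiv[OF F10(1) p1] order_0I[OF pd] by simp
  have o2: "order c F2 = 0" using order_0I[OF p2] .
  show ?thesis unfolding nsq_def
  proof (intro allI notI)
    fix r assume h: "r * r = rpoly (fpoly a b)"
    obtain p q where r: "r = Fract p q" "q \<noteq> 0" by (cases r)
    have "Fract (p * p) (q * q) = Fract (F1 * F2) 1" using h r by (simp add: rpoly_def fpoly_def F1_def F2_def)
    then have e: "p * p = F1 * F2 * (q * q)" using r by (simp add: eq_fract)
    have ne: "F1 * F2 * (q * q) \<noteq> 0" using F10 r by simp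
    then have p0: "p \<noteq> 0" using e by auto
    have "order c (p * p) = order c p + order c p" using p0 by (simp add: order_mult)
    moreover have "order c (F1 * F2 * (q * q)) = 1 + order c q + order c q"
      using ne F10 r o1 o2 by (simp add: order_mult)
    ultimately have "order c p + order c p = 1 + order c q + order c q" using e by simp
    then show False by presburger
  qed
qed

lemma A_f: "psi (- XX) (rpoly (fpoly a b)) = rpoly (fpoly a b)"
  unfolding psi_rpoly[OF nconst_neg_XX] rpoly_f unfolding fpoly_def ev_mult ev4 PP_def
  by simp

lemma PPinv: "(inverse XX)^4 + rc a * (inverse XX)^2 + 1 = PP a / XX^4"
proof -
  have e1: "(inverse XX)^4 * XX^4 = 1" by (simp flip: power_mult_distrib)
  have e2: "(inverse XX)^2 * XX^4 = XX^2"
  proof -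
    have "(inverse XX)^2 * XX^4 = ((inverse XX)^2 * XX^2) * XX^2"
      by (simp add: power4_eq_xxxx power2_eq_square mult_ac)
    also have "(inverse XX)^2 * XX^2 = 1" by (simp flip: power_mult_distrib)
    finally show ?thesis by simp
  qed
  have "((inverse XX)^4 + rc a * (inverse XX)^2 + 1) * XX^4 = PP a"
    unfolding PP_def distrib_right mult.assoc e1 e2 by simp
  then show ?thesis by (simp add: field_simps)
qed

lemma B_f: "psi (inverse XX) (rpoly (fpoly a b)) = rpoly (fpoly a b) / XX^8"
proof -
  have "psi (inverse XX) (rpoly (fpoly a b)) = (PP a / XX^4) * (PP b / XX^4)"
    unfolding psi_rpoly[OF nconst_inv_XX] fpoly_def ev_mult ev4 PPinv ..
  also have "\<dots> = rpoly (fpoly a b) / XX^8"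
    unfolding rpoly_f by (simp add: field_simps power_add[symmetric])
  finally show ?thesis .
qed


lemma cst_eq: "cst c = (rc c, 0)"
  by (simp add: cst_def rc_def)

lemma fm_comm: "ff_mult f u v = ff_mult f v u"
  by (cases u; cases v) (simp add: algebra_simps)
lemma fm_assoc: "ff_mult f (ff_mult f u v) w = ff_mult f u (ff_mult f v w)"
  by (cases u; cases v; cases w) (simp add: algebra_simps)
lemma fm_one [simp]: "ff_mult f (1, 0) u = u" "ff_mult f u (1, 0) = u"
  by (cases u; simp)+
lemma fm_zero [simp]: "ff_mult f (0, 0) u = (0, 0)" "ff_mult f u (0, 0) = (0, 0)"
  by (cases u; simp)+
lemma fm_distr: "ff_mult f u (ff_add v w) = ff_add (ff_mult f u v) (ff_mult f u w)"
  by (cases u; cases v; cases w) (simp add: algebra_simps)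

lemma fld_inv:
  assumes ns: "nsq f" and z: "z \<noteq> (0, 0)"
  shows "\<exists>w. ff_mult f z w = (1, 0)"
proof -
  obtain r0 r1 where zz: "z = (r0, r1)" by (cases z)
  define D where "D = r0 * r0 - rpoly f * r1 * r1"
  have D: "D \<noteq> 0"
  proof
    assume D0: "D = 0"
    show False
    proof (cases "r1 = 0")
      case True
      then show False using D0 z zz by (simp add: D_def)
    next
      case False
      have "(r0 / r1) * (r0 / r1) = rpoly f" using D0 False by (simp add: D_def field_simps)
      then show False using ns unfolding nsq_def by blast
    qed
  qed
  have e1: "r0 * (r0 * inverse D) + rpoly f * r1 * (- (r1 * inverse D)) = D * inverse D"
    unfolding D_def by (simp add: algebra_simps)
  have e2: "r0 * (- (r1 * inverse D)) + r1 * (r0 * inverse D) = 0"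
    by (simp add: algebra_simps)
  have "ff_mult f z (r0 * inverse D, - (r1 * inverse D)) = (1, 0)"
    unfolding zz ff_mult_simp e1 e2 using D by simp
  then show ?thesis by blast
qed

definition ivf :: "complex poly \<Rightarrow> ffel \<Rightarrow> ffel" where "ivf f z = m_inv (FF f) z"

lemma ivf_char:
  assumes "ff_mult f z w = (1, 0)"
  shows "ivf f z = w"
proof -
  interpret cring "FF f" by (rule FF_cring)
  have "w = inv\<^bsub>FF f\<^esub> z"
    by (rule inv_unique') (use assms fm_comm[of f z w] in simp_all)
  then show ?thesis by (simp add: ivf_def)
qed

lemma ivf_r:
  assumes "nsq f" "z \<noteq> (0, 0)"
  shows "ff_mult f z (ivf f z) = (1, 0)"
  using fld_inv[OF assms] ivf_char by metis

lemma ivf_nz: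
  assumes "nsq f" "z \<noteq> (0, 0)"
  shows "ivf f z \<noteq> (0, 0)"
  using ivf_r[OF assms] by auto

lemma ivf_ivf:
  assumes "nsq f" "z \<noteq> (0, 0)"
  shows "ivf f (ivf f z) = z"
  using ivf_r[OF assms] by (intro ivf_char) (simp add: fm_comm)

lemma mult_nz:
  assumes "nsq f" "z \<noteq> (0, 0)" "w \<noteq> (0, 0)"
  shows "ff_mult f z w \<noteq> (0, 0)"
proof
  assume h: "ff_mult f z w = (0, 0)"
  have "z = ff_mult f z (ff_mult f w (ivf f w))" using ivf_r[OF assms(1,3)] by simp
  also have "\<dots> = (0, 0)" by (simp add: fm_assoc[symmetric] h)
  finally show False using assms by simp
qed

lemma ivf_mult:
  assumes "nsq f" "z \<noteq> (0, 0)" "w \<noteq> (0, 0)"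
  shows "ivf f (ff_mult f z w) = ff_mult f (ivf f z) (ivf f w)"
proof (rule ivf_char)
  have "ff_mult f (ff_mult f z w) (ff_mult f (ivf f z) (ivf f w)) =
        ff_mult f (ff_mult f z (ivf f z)) (ff_mult f w (ivf f w))"
    by (metis fm_assoc fm_comm)
  then show "ff_mult f (ff_mult f z w) (ff_mult f (ivf f z) (ivf f w)) = (1, 0)"
    using ivf_r[OF assms(1,2)] ivf_r[OF assms(1,3)] by simp
qed

lemma ivf_cst: "c \<noteq> 0 \<Longrightarrow> ivf f (rc c, 0) = (rc (1 / c), 0)"
  by (rule ivf_char) (simp flip: rc_mult)

lemma ivf_rfun: "r \<noteq> 0 \<Longrightarrow> ivf f (r, 0) = (inverse r, 0)"
  by (rule ivf_char) simp

context
  fixes f :: "complex poly" and V :: "ffel set"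
  assumes ns: "nsq f" and pl: "place f V"
begin

lemma V_sub: "subring V (FF f)" using pl by (simp add: place_def)

lemma V_add: "u \<in> V \<Longrightarrow> v \<in> V \<Longrightarrow> ff_add u v \<in> V"
  using subringE(7)[OF V_sub] by simp
lemma V_mult: "u \<in> V \<Longrightarrow> v \<in> V \<Longrightarrow> ff_mult f u v \<in> V"
  using subringE(6)[OF V_sub] by simp
lemma V_neg: "(a, b) \<in> V \<Longrightarrow> (- a, - b) \<in> V"
proof -
  assume "(a, b) \<in> V"
  then have "a_inv (FF f) (a, b) \<in> V" using subringE(5)[OF V_sub] by blast
  then show ?thesis by simp
qed
lemma V_cst: "(rc c, 0) \<in> V"
  using pl by (auto simp: place_def cst_eq)
lemma V_zero: "(0, 0) \<in> V" using V_cst[of 0] by simp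
lemma V_one: "(1, 0) \<in> V" using V_cst[of 1] by simp
lemma V_ne: "\<exists>z. z \<notin> V" using pl by (auto simp: place_def)
lemma V_val: "z \<noteq> (0, 0) \<Longrightarrow> z \<in> V \<or> ivf f z \<in> V"
proof -
  assume z: "z \<noteq> (0, 0)"
  have h: "\<forall>z \<in> carrier (FF f). z \<noteq> zero (FF f) \<longrightarrow> z \<in> V \<or> m_inv (FF f) z \<in> V"
    using pl unfolding place_def by (elim conjE) assumption
  have "z \<in> carrier (FF f)" "z \<noteq> zero (FF f)" using z by (simp_all only: FF_simps UNIV_I not_False_eq_True)
  then show ?thesis using h unfolding ivf_def by blast
qed

definition unit :: "ffel \<Rightarrow> bool" where "unit z \<longleftrightarrow> z \<in> V \<and> z \<noteq> (0, 0) \<and> ivf f z \<in> V"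
definition mx :: "ffel \<Rightarrow> bool" where "mx z \<longleftrightarrow> z \<in> V \<and> \<not> unit z"

lemma mx_zero: "mx (0, 0)" by (simp add: mx_def unit_def V_zero)

lemma P3: "z \<notin> V \<Longrightarrow> mx (ivf f z)"
proof -
  assume z: "z \<notin> V"
  then have z0: "z \<noteq> (0, 0)" using V_zero by auto
  then have "ivf f z \<in> V" using V_val z by blast
  then show ?thesis using z ivf_ivf[OF ns z0] by (auto simp: mx_def unit_def)
qed

lemma P4: "mx z \<Longrightarrow> w \<in> V \<Longrightarrow> mx (ff_mult f z w)"
proof -
  assume mz: "mx z" and w: "w \<in> V"
  have zV: "z \<in> V" using mz by (simp add: mx_def)
  show ?thesis
  proof (rule ccontr)
    assume "\<not> mx (ff_mult f z w)"
    then have u: "ff_mult f z w \<noteq> (0, 0)" "ivf f (ff_mult f z w) \<in> V"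
      using V_mult[OF zV w] by (auto simp: mx_def unit_def)
    have z0: "z \<noteq> (0, 0)" "w \<noteq> (0, 0)" using u(1) by auto
    have "ff_mult f w (ivf f (ff_mult f z w)) = ff_mult f (ivf f z) (ff_mult f w (ivf f w))"
      unfolding ivf_mult[OF ns z0] by (metis fm_assoc fm_comm)
    also have "\<dots> = ivf f z" using ivf_r[OF ns z0(2)] by simp
    finally have "ivf f z \<in> V" using V_mult[OF w u(2)] by simp
    then show False using mz zV z0 by (simp add: mx_def unit_def)
  qed
qed

lemma P5: "mx z \<Longrightarrow> mx w \<Longrightarrow> mx (ff_add z w)"
proof -
  assume mz: "mx z" and mw: "mx w"
  have zV: "z \<in> V" "w \<in> V" using mz mw by (simp_all add: mx_def)
  show ?thesis
  proof (cases "z = (0, 0) \<or> w = (0, 0)")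
    case True
    then show ?thesis using mz mw by (cases z; cases w) auto
  next
    case False
    then have z0: "z \<noteq> (0, 0)" "w \<noteq> (0, 0)" by auto
    define q where "q = ff_mult f z (ivf f w)"
    have q0: "q \<noteq> (0, 0)" unfolding q_def using mult_nz[OF ns z0(1) ivf_nz[OF ns z0(2)]] .
    have wq: "ff_mult f w q = z" unfolding q_def using ivf_r[OF ns z0(2)]
      by (metis fm_assoc fm_comm fm_one(2))
    have iq: "ivf f q = ff_mult f (ivf f z) w"
      unfolding q_def ivf_mult[OF ns z0(1) ivf_nz[OF ns z0(2)]] ivf_ivf[OF ns z0(2)] ..
    have zq: "ff_mult f z (ivf f q) = w" unfolding iq using ivf_r[OF ns z0(1)]
      by (metis fm_assoc fm_one(1))
    from V_val[OF q0] show ?thesis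
    proof
      assume qV: "q \<in> V"
      have "ff_add z w = ff_mult f w (ff_add q (1, 0))"
        unfolding fm_distr wq by (cases z; cases w) simp
      then show ?thesis using P4[OF mw V_add[OF qV V_one]] by simp
    next
      assume qV: "ivf f q \<in> V"
      have "ff_add z w = ff_mult f z (ff_add (1, 0) (ivf f q))"
        unfolding fm_distr zq by simp
      then show ?thesis using P4[OF mz V_add[OF V_one qV]] by simp
    qed
  qed
qed

lemma P6: "mx (a, b) \<Longrightarrow> mx (- a, - b)"
proof -
  assume "mx (a, b)"
  from P4[OF this V_cst[of "-1"]] show ?thesis by simp
qed

lemma unit_mult: "unit z \<Longrightarrow> unit w \<Longrightarrow> unit (ff_mult f z w)"
  unfolding unit_def using ivf_mult[OF ns] mult_nz[OF ns] V_mult by auto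

lemma P7: "z \<in> V \<Longrightarrow> w \<in> V \<Longrightarrow> mx (ff_mult f z w) \<Longrightarrow> mx z \<or> mx w"
  unfolding mx_def using unit_mult V_mult by blast

lemma P8: "c \<noteq> 0 \<Longrightarrow> \<not> mx (rc c, 0)"
  unfolding mx_def unit_def using V_cst[of c] V_cst[of "1/c"] ivf_cst[of c f] by simp

lemma P9: "ff_mult f z z \<in> V \<Longrightarrow> z \<in> V"
proof (rule ccontr)
  assume zz: "ff_mult f z z \<in> V" and z: "z \<notin> V"
  then have z0: "z \<noteq> (0, 0)" using V_zero by auto
  have m: "mx (ivf f z)" by (rule P3[OF z])
  have "mx (ff_mult f (ff_mult f (ivf f z) (ivf f z)) (ff_mult f z z))"
    using P4[OF P4[OF m] zz] m by (simp add: mx_def)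
  moreover have "ff_mult f (ff_mult f (ivf f z) (ivf f z)) (ff_mult f z z) = (1, 0)"
    using ivf_r[OF ns z0] by (metis fm_assoc fm_comm fm_one(1))
  ultimately show False using P8[of 1] by simp
qed

end


lemma ffm_r0 [simp]: "ff_mult f (u, 0) (v, 0) = (u * v, 0)" by simp

context
  fixes f :: "complex poly" and V :: "ffel set" and s :: "ffel \<Rightarrow> ffel"
  assumes ns: "nsq f" and pl: "place f V" and inv: "curve_involution f s" and SV: "s ` V = V"
begin

abbreviation "M \<equiv> mx f V"
lemmas mxd = mx_def[OF ns pl] and ud = unit_def[OF ns pl]

lemma s_aut: "curve_aut f s" using inv by (simp add: curve_involution_def)
lemma s_ss: "s (s z) = z" using inv unfolding curve_involution_def by (metis comp_apply id_apply)
lemma s_V: "z \<in> V \<Longrightarrow> s z \<in> V" using SV by blast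
lemma s_zero: "s (0, 0) = (0, 0)" using aut_hom(4)[OF s_aut, of 0] by (simp add: cst_eq)
lemma s_cst: "s (rc c, 0) = (rc c, 0)" using aut_hom(4)[OF s_aut, of c] by (simp add: cst_eq)

lemma P10: "M z \<Longrightarrow> M (s z)"
proof -
  assume mz: "M z"
  have zV: "z \<in> V" using mz by (simp add: mxd)
  show "M (s z)"
  proof (rule ccontr)
    assume "\<not> M (s z)"
    then have u: "s z \<noteq> (0, 0)" "ivf f (s z) \<in> V"
      using s_V[OF zV] by (auto simp: mxd ud)
    have z0: "z \<noteq> (0, 0)" using u(1) s_zero by auto
    have "ff_mult f z (s (ivf f (s z))) = s (ff_mult f (s z) (ivf f (s z)))"
      using aut_hom(1)[OF s_aut, of "s z" "ivf f (s z)"] s_ss by simp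
    also have "\<dots> = (1, 0)" using ivf_r[OF ns u(1)] aut_hom(3)[OF s_aut] by simp
    finally have "ivf f z = s (ivf f (s z))" by (rule ivf_char)
    then have "ivf f z \<in> V" using s_V[OF u(2)] by simp
    then show False using mz zV z0 by (simp add: mxd ud)
  qed
qed

lemma CF_sub:
  assumes w: "w \<in> V" and e: "e \<noteq> 0" and m1: "M (fst w - rc e, snd w)"
    and m2: "M (ff_add (s w) w)"
  shows False
proof -
  obtain w0 w1 where ww: "w = (w0, w1)" by (cases w)
  obtain p q where sw0: "s w = (p, q)" by (cases "s w")
  have m2': "M (p + w0, q + w1)" using m2 sw0 ww by simp
  have "s (w0 - rc e, w1) = s (ff_add w (rc (- e), 0))" by (simp add: ww)
  also have "\<dots> = ff_add (s w) (rc (- e), 0)" by (simp only: aut_hom(2)[OF s_aut] s_cst)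
  finally have "M (p - rc e, q)" using P10[OF m1] sw0 ww by simp
  then have "M (- (p - rc e), - q)" by (rule P6[OF ns pl])
  from P5[OF ns pl m2' this] have "M (w0 + rc e, w1)" by simp
  moreover have "M (- (w0 - rc e), - w1)" using P6[OF ns pl, of "w0 - rc e" w1] m1 ww by simp
  ultimately have "M (ff_add (w0 + rc e, w1) (- (w0 - rc e), - w1))" by (rule P5[OF ns pl])
  then have "M (rc (2 * e), 0)" by simp
  then show False using P8[OF ns pl, of "2 * e"] e by simp
qed

lemma CF:
  assumes w: "w \<in> V" and d: "d \<noteq> 0"
    and m1: "M (ff_mult f (fst w - rc d, snd w) (fst w + rc d, snd w))"
    and m2: "M (ff_add (s w) w)"
  shows False
proof -
  have v1: "(fst w - rc d, snd w) \<in> V" using V_add[OF ns pl w V_cst[OF ns pl, of "-d"]] by (cases w) simp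
  have v2: "(fst w + rc d, snd w) \<in> V" using V_add[OF ns pl w V_cst[OF ns pl, of "d"]] by (cases w) simp
  from P7[OF ns pl v1 v2 m1] show False
  proof
    assume "M (fst w - rc d, snd w)" then show False using CF_sub w d m2 by blast
  next
    assume "M (fst w + rc d, snd w)"
    then have "M (fst w - rc (- d), snd w)" by simp
    then show False using CF_sub w d m2 by (metis neg_equal_0_iff_equal)
  qed
qed

lemma polyV: "(u, 0) \<in> V \<Longrightarrow> (ev u p, 0) \<in> V"
proof (induct p)
  case 0 then show ?case using V_zero[OF ns pl] by simp
next
  case (pCons c p)
  have uV: "(u, 0) \<in> V" by fact
  have IH: "(ev u p, 0) \<in> V" using pCons(2) uV .
  have "(ev u (pCons c p), 0) = ff_add (rc c, 0) (ff_mult f (u, 0) (ev u p, 0))"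
    by (simp add: ev_pCons)
  also have "\<dots> \<in> V" by (rule V_add[OF ns pl V_cst[OF ns pl] V_mult[OF ns pl uV IH]])
  finally show ?case .
qed

lemma RE:
  assumes xV: "(XX, 0) \<in> V"
  shows "\<exists>c. M (XX - rc c, 0)"
proof (rule ccontr)
  assume H: "\<not> (\<exists>c. M (XX - rc c, 0))"
  have pV: "(rpoly p, 0) \<in> V" for p using polyV[OF xV, of p] by (simp add: ev_XX)
  have uP: "unit f V (rpoly p, 0)" if "p \<noteq> 0" for p
    using that
  proof (induct "degree p" arbitrary: p)
    case 0
    then obtain c where "p = [:c:]" by (metis degree_eq_zeroE)
    with 0 have "(rpoly p, 0) = (rc c, 0)" "c \<noteq> 0" by (simp_all add: rc_def)
    then show ?case using P8[OF ns pl] V_cst[OF ns pl] by (simp add: mxd)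
  next
    case (Suc n)
    have "\<exists>z. poly p z = 0"
      by (rule fundamental_theorem_of_algebra_alt) (use Suc(2) in auto)
    then obtain z where "poly p z = 0" by blast
    then obtain q where q: "p = [:-z, 1:] * q" by (auto simp: poly_eq_0_iff_dvd)
    with Suc have q0: "q \<noteq> 0" by auto
    have "degree p = degree [:-z, 1:] + degree q"
      unfolding q by (rule degree_mult_eq) (use q0 in auto)
    with Suc(2) have "degree q = n" by simp
    with Suc q0 have uq: "unit f V (rpoly q, 0)" by auto
    have "(XX - rc z, 0) \<in> V" using pV[of "[:-z, 1:]"] by (simp add: rpoly_pCons)
    then have uz: "unit f V (XX - rc z, 0)" using H by (auto simp: mxd)
    have "(rpoly p, 0) = ff_mult f (XX - rc z, 0) (rpoly q, 0)"
      by (simp add: q rpoly_pCons algebra_simps flip: rc_mult_rpoly)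
    then show ?case using unit_mult[OF ns pl uz uq] by simp
  qed
  have rV: "(r, 0) \<in> V" for r
  proof (cases r)
    case (Fract p q)
    have "ivf f (rpoly q, 0) \<in> V" using uP[OF Fract(2)] by (simp add: ud)
    then have "(inverse (rpoly q), 0) \<in> V" using Fract(2) ivf_rfun[of "rpoly q" f] by simp
    from V_mult[OF ns pl pV[of p] this] show ?thesis using Fract by (simp add: Fract_rpoly divide_inverse)
  qed
  have "ff_mult f (0, 1) (0, 1) \<in> V" using rV[of "rpoly f"] by simp
  then have yV: "(0, 1) \<in> V" by (rule P9[OF ns pl])
  have "z \<in> V" for z
  proof -
    obtain r0 r1 where z: "z = (r0, r1)" by (cases z)
    have "z = ff_add (r0, 0) (ff_mult f (r1, 0) (0, 1))" by (simp add: z)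
    then show ?thesis using V_add[OF ns pl rV V_mult[OF ns pl rV yV]] by simp
  qed
  then show False using V_ne[OF ns pl] by blast
qed

end


context
  fixes F :: "complex poly" and V :: "ffel set" and s :: "ffel \<Rightarrow> ffel"
  assumes ns: "nsq F" and pl: "place F V" and inv: "curve_involution F s" and SV: "s ` V = V"
    and F0: "poly F 0 = 1"
begin

lemma CX:
  assumes mu: "mx F V (u, 0)" and w: "w \<in> V" and ww: "ff_mult F w w = (ev u F, 0)"
    and ms: "mx F V (ff_add (s w) w)"
  shows False
proof -
  have uV: "(u, 0) \<in> V" using mu mx_def[OF ns pl] by blast
  have "poly (F - 1) 0 = 0" using F0 by simp
  then have "[:- 0, 1:] dvd F - 1" by (simp only: poly_eq_0_iff_dvd)
  then obtain Q where "F - 1 = [:- 0, 1:] * Q" by (elim dvdE)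
  then have Q: "F - 1 = pCons 0 Q" by simp
  have eQ: "ev u F - 1 = u * ev u Q"
  proof -
    have "ev u (F - 1) = ev u (pCons 0 Q)" by (simp only: Q)
    then show ?thesis by (simp add: ev_pCons)
  qed
  obtain w0 w1 where w01: "w = (w0, w1)" by (cases w)
  have "ff_mult F (fst w - rc 1, snd w) (fst w + rc 1, snd w) = ff_add (ff_mult F w w) (-1, 0)"
    unfolding w01 by (simp add: algebra_simps)
  also have "\<dots> = ff_mult F (u, 0) (ev u Q, 0)" using ww eQ by simp
  finally have "mx F V (ff_mult F (fst w - rc 1, snd w) (fst w + rc 1, snd w))"
    using P4[OF ns pl mu polyV[OF ns pl inv SV uV]] by simp
  then show False using CF[OF ns pl inv SV w _ _ ms, of 1] by simp
qed

end

lemma F0: "poly (fpoly a b) 0 = 1" by (simp add: fpoly_def)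

lemma fp_sigma:
  assumes ns: "nsq (fpoly a b)" and inv: "curve_involution (fpoly a b) s"
    and hs: "\<And>r0 r1. s (r0, r1) = (psi (- XX) r0, -1 * psi (- XX) r1)"
  shows "fixed_points (fpoly a b) s = {}"
proof (rule ccontr)
  let ?F = "fpoly a b"
  assume "fixed_points ?F s \<noteq> {}"
  then obtain V where pl: "place ?F V" and SV: "s ` V = V" by (auto simp: fixed_points_def)
  note mxd = mx_def[OF ns pl]
  show False
  proof (cases "(XX, 0) \<in> V")
    case True
    obtain c where c: "mx ?F V (XX - rc c, 0)" using RE[OF ns pl inv SV True] by blast
    have "mx ?F V (s (XX - rc c, 0))" by (rule P10[OF ns pl inv SV c])
    then have "mx ?F V (- XX - rc c, 0)" by (simp add: hs)
    from P5[OF ns pl c this] have "mx ?F V (rc (-2 * c), 0)" by simp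
    then have "c = 0" using P8[OF ns pl, of "-2 * c"] by auto
    with c have mX: "mx ?F V (XX, 0)" by simp
    have ww: "ff_mult ?F (0, 1) (0, 1) = (ev XX ?F, 0)" by (simp add: ev_XX)
    have wV: "(0, 1) \<in> V" by (rule P9[OF ns pl]) (use polyV[OF ns pl inv SV True, of ?F] ww in simp)
    have "mx ?F V (ff_add (s (0, 1)) (0, 1))" using mx_zero[OF ns pl] by (simp add: hs)
    then show False using CX[OF ns pl inv SV F0 mX wV ww] by blast
  next
    case False
    have mI: "mx ?F V (inverse XX, 0)" using P3[OF ns pl False] ivf_rfun[of XX ?F] by simp
    have IV: "(inverse XX, 0) \<in> V" using mI mxd by blast
    have ww: "ff_mult ?F (0, inverse XX ^ 4) (0, inverse XX ^ 4) = (ev (inverse XX) ?F, 0)"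
    proof -
      have "ev (inverse XX) ?F = (PP a / XX^4) * (PP b / XX^4)"
        unfolding fpoly_def ev_mult ev4 PPinv ..
      then show ?thesis by (simp add: rpoly_f divide_inverse power_inverse mult_ac)
    qed
    have wV: "(0, inverse XX ^ 4) \<in> V" by (rule P9[OF ns pl]) (use polyV[OF ns pl inv SV IV, of ?F] ww in simp)
    have "mx ?F V (ff_add (s (0, inverse XX ^ 4)) (0, inverse XX ^ 4))" using mx_zero[OF ns pl] by (simp add: hs)
    then show False using CX[OF ns pl inv SV F0 mI wV ww] by blast
  qed
qed

lemma fp_tau:
  assumes a2: "a \<noteq> -2" and b2: "b \<noteq> -2" and ns: "nsq (fpoly a b)"
    and inv: "curve_involution (fpoly a b) s"
    and hs: "\<And>r0 r1. s (r0, r1) = (psi (inverse XX) r0, -1 * psi (inverse XX) r1 / XX^4)"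
  shows "fixed_points (fpoly a b) s = {}"
proof (rule ccontr)
  let ?F = "fpoly a b"
  assume "fixed_points ?F s \<noteq> {}"
  then obtain V where pl: "place ?F V" and SV: "s ` V = V" by (auto simp: fixed_points_def)
  note mxd = mx_def[OF ns pl] and ud = unit_def[OF ns pl]
  have x0: "(XX, 0) \<noteq> ((0::rfun), (0::rfun))" by simp
  have sX: "s (XX, 0) = (inverse XX, 0)" by (simp add: hs)
  have sI: "s (inverse XX, 0) = (XX, 0)" by (simp add: hs)
  have iX: "ivf ?F (XX, 0) = (inverse XX, 0)" by (rule ivf_rfun) simp
  have XIV: "(XX, 0) \<in> V \<and> (inverse XX, 0) \<in> V"
    using V_val[OF ns pl x0] s_V[OF ns pl inv SV, of "(XX, 0)"] s_V[OF ns pl inv SV, of "(inverse XX, 0)"]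
    unfolding iX sX sI by blast
  then have XV: "(XX, 0) \<in> V" and IV: "(inverse XX, 0) \<in> V" by auto
  have nX: "\<not> mx ?F V (XX, 0)" using XV IV iX by (simp add: mxd ud)
  obtain c where c: "mx ?F V (XX - rc c, 0)" using RE[OF ns pl inv SV XV] by blast
  have c0: "c \<noteq> 0" using c nX by auto
  have m1: "mx ?F V (inverse XX - rc c, 0)"
    using P10[OF ns pl inv SV c] by (simp add: hs)
  have e2: "ff_mult ?F (inverse XX - rc c, 0) (XX, 0) = (1 - rc c * XX, 0)"
    by (simp add: algebra_simps)
  have m2: "mx ?F V (1 - rc c * XX, 0)" using P4[OF ns pl m1 XV] e2 by simp
  have e3: "ff_mult ?F (XX - rc c, 0) (rc c, 0) = (rc c * XX - rc c * rc c, 0)"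
    by (simp add: algebra_simps)
  have m3: "mx ?F V (rc c * XX - rc c * rc c, 0)" using P4[OF ns pl c V_cst[OF ns pl, of c]] e3 by simp
  have "mx ?F V (ff_add (1 - rc c * XX, 0) (rc c * XX - rc c * rc c, 0))" by (rule P5[OF ns pl m2 m3])
  then have "mx ?F V (rc (1 - c * c), 0)" by simp
  then have cc: "c * c = 1" using P8[OF ns pl, of "1 - c * c"] by auto
  have c4: "c^4 = 1" using cc by (simp add: power4_eq_xxxx mult.assoc[symmetric])
  have e4: "(XX^4 - 1, 0) = ff_mult ?F (XX - rc c, 0) (ev XX [:c^3, c^2, c, 1:], 0)"
  proof -
    have "(XX - rc c) * ev XX [:c^3, c^2, c, 1:] = XX^4 - rc c ^ 4"
      by (simp add: ev_pCons algebra_simps power4_eq_xxxx power3_eq_cube power2_eq_square)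
    also have "rc c ^ 4 = 1" using c4 by (simp flip: rc_power)
    finally show ?thesis by simp
  qed
  have X4: "mx ?F V (XX^4 - 1, 0)"
    unfolding e4 by (rule P4[OF ns pl c polyV[OF ns pl inv SV XV]])
  have yy: "ff_mult ?F (0, 1) (0, 1) = (ev XX ?F, 0)" by (simp add: ev_XX)
  have yV: "(0, 1) \<in> V" by (rule P9[OF ns pl]) (use polyV[OF ns pl inv SV XV, of ?F] yy in simp)
  define pc where "pc = poly ?F c"
  have c2: "c^2 = 1" using cc by (simp add: power2_eq_square)
  have "pc = ((c^2)^2 + a * c^2 + 1) * ((c^2)^2 + b * c^2 + 1)"
    unfolding pc_def fpoly_def by (simp add: algebra_simps power2_eq_square)
  also have "\<dots> = (2 + a) * (2 + b)" using c2 by simp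
  finally have pce: "pc = (2 + a) * (2 + b)" .
  have "2 + a \<noteq> 0" using a2 eq_neg_iff_add_eq_0[of a 2] by (simp add: add.commute)
  moreover have "2 + b \<noteq> 0" using b2 eq_neg_iff_add_eq_0[of b 2] by (simp add: add.commute)
  ultimately have pc0: "pc \<noteq> 0" using pce by simp
  define d where "d = csqrt pc"
  have d2: "d * d = pc" unfolding d_def by (metis power2_csqrt power2_eq_square)
  have d0: "d \<noteq> 0" using d2 pc0 by auto
  have "poly (?F - [:pc:]) c = 0" by (simp add: pc_def)
  then have "[:- c, 1:] dvd ?F - [:pc:]" by (simp only: poly_eq_0_iff_dvd)
  then obtain Q where Q: "?F - [:pc:] = [:- c, 1:] * Q" by (elim dvdE)
  have e5: "ff_mult ?F (fst (0, 1) - rc d, snd (0, 1)) (fst (0, 1) + rc d, snd (0, 1)) =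
      ff_mult ?F (XX - rc c, 0) (rpoly Q, 0)"
  proof -
    have "rpoly (?F - [:pc:]) = rpoly ([:- c, 1:] * Q)" by (simp only: Q)
    then have "rpoly ?F - rc pc = (XX - rc c) * rpoly Q"
      by (simp add: rpoly_pCons algebra_simps flip: rc_def rc_mult_rpoly)
    moreover have "rc pc = rc d * rc d" by (simp flip: d2)
    ultimately show ?thesis by (simp add: algebra_simps)
  qed
  have m4: "mx ?F V (ff_mult ?F (fst (0, 1) - rc d, snd (0, 1)) (fst (0, 1) + rc d, snd (0, 1)))"
    unfolding e5 by (rule P4[OF ns pl c]) (use polyV[OF ns pl inv SV XV, of Q] in \<open>simp add: ev_XX\<close>)
  have I4V: "(inverse XX ^ 4, 0) \<in> V"
    using polyV[OF ns pl inv SV IV, of "[:0, 0, 0, 0, 1:]"] by (simp add: ev_pCons power4_eq_xxxx mult.assoc)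
  have e6: "ff_add (s (0, 1)) (0, 1) = ff_mult ?F (ff_mult ?F (XX^4 - 1, 0) (inverse XX ^ 4, 0)) (0, 1)"
  proof -
    have "s (0, 1) = (0, - 1 / XX^4)" by (simp add: hs)
    then show ?thesis by (simp add: field_simps)
  qed
  have m5: "mx ?F V (ff_add (s (0, 1)) (0, 1))"
    unfolding e6 by (rule P4[OF ns pl P4[OF ns pl X4 I4V] yV])
  show False by (rule CF[OF ns pl inv SV yV d0 m4 m5])
qed


theorem proposition4p3:
  fixes a b :: complex and \<sigma> \<tau> :: "ffel \<Rightarrow> ffel"
  defines "f \<equiv> [:1, 0, a, 0, 1:] * [:1, 0, b, 0, 1:]"
  defines "\<iota> \<equiv> hyp_inv"
  assumes "a \<notin> {-2, 2}" and "b \<notin> {-2, 2}" and "a \<noteq> b"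
  assumes "curve_involution f \<sigma>" and "card (fixed_points f \<sigma>) = 4"
      and "\<sigma> xx = (- rpoly [:0, 1:], 0)"
  assumes "curve_involution f \<tau>" and "card (fixed_points f \<tau>) = 4"
      and "\<tau> xx = (inverse (rpoly [:0, 1:]), 0)"
  shows "quotient_has_eq f {\<iota> \<circ> \<tau>} ([:-4, 0, 1:] * [:a - 2, 0, 1:] * [:b - 2, 0, 1:]) \<and>
         quotient_has_eq f {\<iota> \<circ> \<sigma>} ([:0, 1:] * [:1, a, 1:] * [:1, b, 1:]) \<and>
         quotient_has_eq f {\<iota> \<circ> \<sigma> \<circ> \<tau>} ([:4, 0, 1:] * [:a + 2, 0, 1:] * [:b + 2, 0, 1:]) \<and>
         quotient_has_eq f {\<tau>} ([:a - 2, 0, 1:] * [:b - 2, 0, 1:]) \<and>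
         quotient_has_eq f {\<sigma>} ([:1, a, 1:] * [:1, b, 1:]) \<and>
         quotient_has_eq f {\<sigma> \<circ> \<tau>} ([:a + 2, 0, 1:] * [:b + 2, 0, 1:]) \<and>
         quotient_has_eq f {\<iota> \<circ> \<sigma>, \<iota> \<circ> \<tau>} ([:a, 1:] * [:b, 1:] * [:-2, 1:]) \<and>
         quotient_has_eq f {\<iota> \<circ> \<tau>, \<sigma>} ([:a, 1:] * [:b, 1:] * [:-2, 1:] * [:2, 1:]) \<and>
         quotient_has_eq f {\<iota> \<circ> \<sigma>, \<tau>} ([:a, 1:] * [:b, 1:] * [:2, 1:])"
proof -
  have fF: "f = fpoly a b" unfolding f_def fpoly_def ..
  have a2: "a \<noteq> 2" "a \<noteq> -2" and b2: "b \<noteq> -2" using assms(3,4) by auto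
  have ns: "nsq (fpoly a b)" by (rule nsq_f[OF a2 assms(5)])
  have sx: "\<sigma> xx = (- XX, 0)" using assms(8) by (simp add: XX_def)
  have tx: "\<tau> xx = (inverse XX, 0)" using assms(11) by (simp add: XX_def)
  have invs: "curve_involution (fpoly a b) \<sigma>" using assms(6) fF by simp
  have invt: "curve_involution (fpoly a b) \<tau>" using assms(9) fF by simp
  obtain e1 where e1: "e1 = 1 \<or> e1 = -1"
    and hs1: "\<And>r0 r1. \<sigma> (r0, r1) = (psi (- XX) r0, e1 * psi (- XX) r1)"
    using sigma_form[of "fpoly a b" \<sigma>, OF _ sx ns A_f[of a b]] invs by (auto simp: curve_involution_def)
  have "e1 \<noteq> -1"
  proof
    assume "e1 = -1"
    then have "fixed_points (fpoly a b) \<sigma> = {}" using fp_sigma[OF ns invs] hs1 by simp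
    then show False using assms(7) fF by simp
  qed
  with e1 have hs: "\<And>r0 r1. \<sigma> (r0, r1) = (psi (- XX) r0, psi (- XX) r1)" using hs1 by simp
  obtain e2 where e2: "e2 = 1 \<or> e2 = -1"
    and ht1: "\<And>r0 r1. \<tau> (r0, r1) = (psi (inverse XX) r0, e2 * psi (inverse XX) r1 / XX^4)"
    using tau_form[of "fpoly a b" \<tau>, OF _ tx ns B_f[of a b]] invt by (auto simp: curve_involution_def)
  have "e2 \<noteq> -1"
  proof
    assume "e2 = -1"
    then have "fixed_points (fpoly a b) \<tau> = {}" using fp_tau[OF a2(2) b2 ns invt] ht1 by simp
    then show False using assms(10) fF by simp
  qed
  with e2 have ht: "\<And>r0 r1. \<tau> (r0, r1) = (psi (inverse XX) r0, psi (inverse XX) r1 / XX^4)"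
    using ht1 by simp
  show ?thesis unfolding fF \<iota>_def
    using case1[OF ht] case2[OF hs] case3[OF hs ht] case4[OF ht] case5[OF hs] case6[OF hs ht]
      case7[OF hs ht] case8[OF hs ht] case9[OF hs ht]
    by blast
qed


end
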